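(* Let $G$ be a countable directed graph and let $x,y\in\mathcal{V}(G)$ with $x\neq y$. Assume there are exactly $n$ distinct edges with source $x$ and range $y$, where $1\le n\le\infty$. Then the closed ideal $\operatorname{rad}(\mathcal{T}_+(G)/\mathcal{K}_{x,y})$ of the Banach algebra $\mathcal{T}_+(G)/\mathcal{K}_{x,y}$ is $n$-generated; indeed, if $e_1,e_2,\dots$ are these edges then the cosets $L_{e_i}+\mathcal{K}_{x,y}$ form a generating set, and no generating set has fewer than $n$ elements (for $n=\infty$: there is no finite generating set).
   Context: A countable directed graph $G$ has countable vertex set $\mathcal{V}(G)$, edge set $\mathcal{E}(G)$, range and source maps $r,s$. The free semigroupoid $\mathbb{F}^+(G)$ consists of vertices and finite paths $w=e_k\cdots e_1$ with $s(e_i)=r(e_{i-1})$, $s(w)=s(e_1)$, $r(w)=r(e_k)$. On $\ell^2(\mathbb{F}^+(G))$ with orthonormal basis $\{\xi_w\}$, $L_e\xi_w=\xi_{ew}$ if $s(e)=r(w)$ and $0$ otherwise, and $P_v$ is the projection onto $\overline{\operatorname{span}}\{\xi_w:r(w)=v\}$. $\mathcal{T}_+(G)$ is the norm-closed operator algebra generated by all $L_e$ and $P_v$. $\mathfrak{M}_{G,x}$ is the set of characters $\rho$ of $\mathcal{T}_+(G)$ with $\rho(P_x)=1$. A two-dimensional nest representation is a continuous homomorphism $\pi$ of $\mathcal{T}_+(G)$ onto the algebra of operators on a 2-dimensional Hilbert space leaving a fixed one-dimensional subspace $N$ invariant; with unit vectors $h_2\in N$, $h_1\in N^\perp$, $\rho^{(i)}_\pi(A)=\langle\pi(A)h_i,h_i\rangle$.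 $\operatorname{rep}_{x,y}(\mathcal{T}_+(G))$ is the set of such $\pi$ with $\rho^{(1)}_\pi\in\mathfrak{M}_{G,x}$, $\rho^{(2)}_\pi\in\mathfrak{M}_{G,y}$; $\mathcal{K}_{x,y}=\bigcap\{\ker\pi:\pi\in\operatorname{rep}_{x,y}(\mathcal{T}_+(G))\}$; $\operatorname{rad}$ is the Jacobson radical. A subset of a closed ideal $\mathcal{I}$ of a Banach algebra is a generating set if the closed ideal it generates is $\mathcal{I}$; $\mathcal{I}$ is $n$-generated if $n$ is the smallest cardinality of a generating set, and $\infty$-generated means there is no finite generating set. *)

theory Defs
  imports "HOL-Analysis.Analysis"
begin

record ('v, 'e) digraph =
  verts :: "'v set"
  edges :: "'e set"
  rng   :: "'e \<Rightarrow> 'v"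
  src   :: "'e \<Rightarrow> 'v"

definition digraph_wf :: "('v, 'e) digraph \<Rightarrow> bool" where
  "digraph_wf G \<longleftrightarrow> (\<forall>e\<in>edges G. rng G e \<in> verts G \<and> src G e \<in> verts G)"

text \<open>A path \<open>e_k \<dots> e_1\<close> is encoded as the pair \<open>(r(w), [e_k, \<dots>, e_1])\<close>;
  a vertex \<open>v\<close> is the path \<open>(v, [])\<close>.  Hence \<open>r(w) = fst w\<close>.\<close>
type_synonym ('v, 'e) path = "'v \<times> 'e list"

definition is_path :: "('v, 'e) digraph \<Rightarrow> ('v, 'e) path \<Rightarrow> bool" where
  "is_path G w \<longleftrightarrow> (case w of (v, es) \<Rightarrow>
      set es \<subseteq> edges G \<and>
      (es = [] \<longrightarrow> v \<in> verts G) \<and>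
      (es \<noteq> [] \<longrightarrow> v = rng G (hd es)) \<and>
      (\<forall>i. Suc i < length es \<longrightarrow> src G (es ! i) = rng G (es ! Suc i)))"

type_synonym ('v, 'e) vect = "('v, 'e) path \<Rightarrow> complex"
type_synonym ('v, 'e) oper = "('v, 'e) vect \<Rightarrow> ('v, 'e) vect"

definition ell2 :: "('v, 'e) digraph \<Rightarrow> ('v, 'e) vect set" where
  "ell2 G = {f. (\<forall>w. f w \<noteq> 0 \<longrightarrow> is_path G w) \<and>
                (\<lambda>w. (cmod (f w))\<^sup>2) summable_on UNIV}"

definition hnorm :: "('v, 'e) vect \<Rightarrow> real" where
  "hnorm f = sqrt (infsum (\<lambda>w. (cmod (f w))\<^sup>2) UNIV)"

text \<open>Operators are represented extensionally: they vanish outside \<open>ell2 G\<close>.\<close>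
definition is_bop :: "('v, 'e) digraph \<Rightarrow> ('v, 'e) oper \<Rightarrow> bool" where
  "is_bop G A \<longleftrightarrow>
     (\<forall>f\<in>ell2 G. A f \<in> ell2 G) \<and>
     (\<forall>f. f \<notin> ell2 G \<longrightarrow> A f = (\<lambda>_. 0)) \<and>
     (\<forall>f\<in>ell2 G. \<forall>g\<in>ell2 G. \<forall>c::complex.
         A (\<lambda>w. c * f w + g w) = (\<lambda>w. c * A f w + A g w)) \<and>
     (\<exists>C. \<forall>f\<in>ell2 G. hnorm (A f) \<le> C * hnorm f)"

definition opnorm :: "('v, 'e) digraph \<Rightarrow> ('v, 'e) oper \<Rightarrow> real" where
  "opnorm G A = Sup {hnorm (A f) | f. f \<in> ell2 G \<and> hnorm f \<le> 1}"

definition op_add :: "('v, 'e) oper \<Rightarrow> ('v, 'e) oper \<Rightarrow> ('v, 'e) oper" where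
  "op_add A B = (\<lambda>f w. A f w + B f w)"

definition op_scale :: "complex \<Rightarrow> ('v, 'e) oper \<Rightarrow> ('v, 'e) oper" where
  "op_scale c A = (\<lambda>f w. c * A f w)"

definition op_mult :: "('v, 'e) oper \<Rightarrow> ('v, 'e) oper \<Rightarrow> ('v, 'e) oper" where
  "op_mult A B = A \<circ> B"

definition op_zero :: "('v, 'e) oper" where
  "op_zero = (\<lambda>f w. 0)"

definition op_diff :: "('v, 'e) oper \<Rightarrow> ('v, 'e) oper \<Rightarrow> ('v, 'e) oper" where
  "op_diff A B = op_add A (op_scale (-1) B)"

text \<open>\<open>L_e \<xi>_w = \<xi>_{ew}\<close> if \<open>s(e) = r(w)\<close>, and \<open>0\<close> otherwise.\<close>
definition L :: "('v, 'e) digraph \<Rightarrow> 'e \<Rightarrow> ('v, 'e) oper" where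
  "L G e = (\<lambda>f. if f \<in> ell2 G then
               (\<lambda>w. if is_path G w \<and> snd w \<noteq> [] \<and> hd (snd w) = e
                    then f (src G e, tl (snd w)) else 0)
             else (\<lambda>_. 0))"

definition P :: "('v, 'e) digraph \<Rightarrow> 'v \<Rightarrow> ('v, 'e) oper" where
  "P G v = (\<lambda>f. if f \<in> ell2 G then (\<lambda>w. if fst w = v then f w else 0) else (\<lambda>_. 0))"

inductive_set alg_gen :: "('v, 'e) oper set \<Rightarrow> ('v, 'e) oper set" for S where
  gen: "A \<in> S \<Longrightarrow> A \<in> alg_gen S"
| add: "A \<in> alg_gen S \<Longrightarrow> B \<in> alg_gen S \<Longrightarrow> op_add A B \<in> alg_gen S"
| scale: "A \<in> alg_gen S \<Longrightarrow> op_scale c A \<in> alg_gen S"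
| mult: "A \<in> alg_gen S \<Longrightarrow> B \<in> alg_gen S \<Longrightarrow> op_mult A B \<in> alg_gen S"

definition Tplus :: "('v, 'e) digraph \<Rightarrow> ('v, 'e) oper set" where
  "Tplus G = {A. is_bop G A \<and>
     (\<forall>\<epsilon>>0. \<exists>B\<in>alg_gen (L G ` edges G \<union> P G ` verts G). opnorm G (op_diff A B) < \<epsilon>)}"

definition character :: "('v, 'e) digraph \<Rightarrow> (('v, 'e) oper \<Rightarrow> complex) \<Rightarrow> bool" where
  "character G \<rho> \<longleftrightarrow>
     (\<forall>A\<in>Tplus G. \<forall>B\<in>Tplus G. \<rho> (op_add A B) = \<rho> A + \<rho> B \<and>
                                 \<rho> (op_mult A B) = \<rho> A * \<rho> B) \<and>
     (\<forall>A\<in>Tplus G. \<forall>c. \<rho> (op_scale c A) = c * \<rho> A) \<and>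
     (\<exists>A\<in>Tplus G. \<rho> A \<noteq> 0)"

definition Mchar :: "('v, 'e) digraph \<Rightarrow> 'v \<Rightarrow> (('v, 'e) oper \<Rightarrow> complex) set" where
  "Mchar G x = {\<rho>. character G \<rho> \<and> \<rho> (P G x) = 1}"

text \<open>The 2-dimensional Hilbert space is taken to be \<open>\<complex>^2\<close> with \<open>N = span{e_2}\<close>,
  \<open>h_1 = e_1 \<in> N\<^sup>\<bottom>\<close>, \<open>h_2 = e_2 \<in> N\<close>. Operators leaving \<open>N\<close> invariant are the matrices
  \<open>M\<close> with \<open>M $ 1 $ 2 = 0\<close>, and \<open>\<langle>M h_i, h_i\<rangle> = M $ i $ i\<close>.\<close>
definition nest_rep :: "('v, 'e) digraph \<Rightarrow> (('v, 'e) oper \<Rightarrow> complex^2^2) \<Rightarrow> bool" where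
  "nest_rep G \<pi> \<longleftrightarrow>
     (\<forall>A\<in>Tplus G. \<forall>B\<in>Tplus G. \<pi> (op_add A B) = \<pi> A + \<pi> B \<and>
                                 \<pi> (op_mult A B) = \<pi> A ** \<pi> B) \<and>
     (\<forall>A\<in>Tplus G. \<forall>c. \<pi> (op_scale c A) = mat c ** \<pi> A) \<and>
     (\<exists>C. \<forall>A\<in>Tplus G. norm (\<pi> A) \<le> C * opnorm G A) \<and>
     \<pi> ` Tplus G = {M. M $ 1 $ 2 = 0}"

definition rep_xy :: "('v, 'e) digraph \<Rightarrow> 'v \<Rightarrow> 'v \<Rightarrow> (('v, 'e) oper \<Rightarrow> complex^2^2) set" where
  "rep_xy G x y = {\<pi>. nest_rep G \<pi> \<and> (\<lambda>A. \<pi> A $ 1 $ 1) \<in> Mchar G x \<and> (\<lambda>A. \<pi> A $ 2 $ 2) \<in> Mchar G y}"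

definition Kxy :: "('v, 'e) digraph \<Rightarrow> 'v \<Rightarrow> 'v \<Rightarrow> ('v, 'e) oper set" where
  "Kxy G x y = {A \<in> Tplus G. \<forall>\<pi>\<in>rep_xy G x y. \<pi> A = 0}"

record 'a calg =
  carr :: "'a set"
  plus :: "'a \<Rightarrow> 'a \<Rightarrow> 'a"
  times :: "'a \<Rightarrow> 'a \<Rightarrow> 'a"
  scal :: "complex \<Rightarrow> 'a \<Rightarrow> 'a"
  zer :: "'a"
  nrm :: "'a \<Rightarrow> real"

text \<open>\<open>z\<close> is left quasi-regular: \<open>\<exists>c. c + z - c z = 0\<close>, i.e. \<open>(1 - c)(1 - z) = 1\<close> in the unitization.\<close>
definition lqr :: "'a calg \<Rightarrow> 'a \<Rightarrow> bool" where
  "lqr A z \<longleftrightarrow> (\<exists>c\<in>carr A. plus A c (plus A z (scal A (-1) (times A c z))) = zer A)"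

text \<open>Jacobson radical: the largest left quasi-regular left ideal, i.e. the set of \<open>a\<close> such that
  the left ideal \<open>A\<^sup>1 a = {\<lambda> a + b a}\<close> generated by \<open>a\<close> consists of left quasi-regular elements.\<close>
definition jrad :: "'a calg \<Rightarrow> 'a set" where
  "jrad A = {a \<in> carr A. \<forall>t. \<forall>b\<in>carr A. lqr A (plus A (scal A t a) (times A b a))}"

definition is_ideal :: "'a calg \<Rightarrow> 'a set \<Rightarrow> bool" where
  "is_ideal A J \<longleftrightarrow> J \<subseteq> carr A \<and> zer A \<in> J \<and>
     (\<forall>a\<in>J. \<forall>b\<in>J. plus A a b \<in> J) \<and>
     (\<forall>a\<in>J. \<forall>c. scal A c a \<in> J) \<and>
     (\<forall>a\<in>J. \<forall>b\<in>carr A. times A b a \<in> J \<and> times A a b \<in> J)"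

definition is_closed_in :: "'a calg \<Rightarrow> 'a set \<Rightarrow> bool" where
  "is_closed_in A J \<longleftrightarrow> (\<forall>a\<in>carr A.
     (\<forall>\<epsilon>>0. \<exists>b\<in>J. nrm A (plus A a (scal A (-1) b)) < \<epsilon>) \<longrightarrow> a \<in> J)"

definition closed_ideal_gen :: "'a calg \<Rightarrow> 'a set \<Rightarrow> 'a set" where
  "closed_ideal_gen A S = \<Inter>{J. is_ideal A J \<and> is_closed_in A J \<and> S \<subseteq> J}"

definition generating_set :: "'a calg \<Rightarrow> 'a set \<Rightarrow> 'a set \<Rightarrow> bool" where
  "generating_set A I S \<longleftrightarrow> S \<subseteq> I \<and> closed_ideal_gen A S = I"

definition n_generated :: "'a calg \<Rightarrow> 'a set \<Rightarrow> enat \<Rightarrow> bool" where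
  "n_generated A I n \<longleftrightarrow>
     (if n = \<infinity> then \<not> (\<exists>S. finite S \<and> generating_set A I S)
      else (\<exists>S. finite S \<and> generating_set A I S \<and> enat (card S) = n) \<and>
           (\<forall>S. finite S \<and> generating_set A I S \<longrightarrow> n \<le> enat (card S)))"

definition coset :: "('v, 'e) oper set \<Rightarrow> ('v, 'e) oper \<Rightarrow> ('v, 'e) oper set" where
  "coset K A = (\<lambda>k. op_add A k) ` K"

definition crep :: "('v, 'e) oper set \<Rightarrow> ('v, 'e) oper" where
  "crep C = (SOME a. a \<in> C)"

definition quot_alg :: "('v, 'e) digraph \<Rightarrow> ('v, 'e) oper set \<Rightarrow> ('v, 'e) oper set \<Rightarrow> ('v, 'e) oper set calg" where
  "quot_alg G T K =
     \<lparr> carr = coset K ` T,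
       plus = (\<lambda>C D. coset K (op_add (crep C) (crep D))),
       times = (\<lambda>C D. coset K (op_mult (crep C) (crep D))),
       scal = (\<lambda>c C. coset K (op_scale c (crep C))),
       zer = coset K op_zero,
       nrm = (\<lambda>C. Inf (opnorm G ` C)) \<rparr>"

definition QA :: "('v, 'e) digraph \<Rightarrow> 'v \<Rightarrow> 'v \<Rightarrow> ('v, 'e) oper set calg" where
  "QA G x y = quot_alg G (Tplus G) (Kxy G x y)"

definition edges_from_to :: "('v, 'e) digraph \<Rightarrow> 'v \<Rightarrow> 'v \<Rightarrow> 'e set" where
  "edges_from_to G x y = {e \<in> edges G. src G e = x \<and> rng G e = y}"

definition ecard :: "'a set \<Rightarrow> enat" where
  "ecard S = (if finite S then enat (card S) else \<infinity>)"

end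

theory Submission
  imports Defs
begin

lemma ell2_iff: "f \<in> ell2 G \<longleftrightarrow> (\<forall>w. f w \<noteq> 0 \<longrightarrow> is_path G w) \<and> (\<lambda>w. (cmod (f w))\<^sup>2) summable_on UNIV"
  unfolding ell2_def by simp

lemma ell2_summ: "f \<in> ell2 G \<Longrightarrow> (\<lambda>w. (cmod (f w))\<^sup>2) summable_on UNIV"
  unfolding ell2_def by simp

lemma ell2_supp: "f \<in> ell2 G \<Longrightarrow> f w \<noteq> 0 \<Longrightarrow> is_path G w"
  unfolding ell2_def by (cases w) auto

lemma zero_ell2[simp]: "(\<lambda>_. 0) \<in> ell2 G"
  unfolding ell2_def by simp

lemma sq_add_le: "(cmod (a + b))\<^sup>2 \<le> 2 * (cmod a)\<^sup>2 + 2 * (cmod b)\<^sup>2"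
proof -
  have "cmod (a + b) \<le> cmod a + cmod b" by (rule norm_triangle_ineq)
  hence "(cmod (a + b))\<^sup>2 \<le> (cmod a + cmod b)\<^sup>2" by (simp add: power_mono)
  also have "\<dots> \<le> 2 * (cmod a)\<^sup>2 + 2 * (cmod b)\<^sup>2"
  proof -
    have "0 \<le> (cmod a - cmod b)\<^sup>2" by simp
    thus ?thesis by (simp add: power2_eq_square algebra_simps)
  qed
  finally show ?thesis .
qed

lemma lincomb_ell2:
  assumes "f \<in> ell2 G" "g \<in> ell2 G"
  shows "(\<lambda>w. c * f w + g w) \<in> ell2 G"
proof -
  have s: "(\<lambda>w. 2 * (cmod c)\<^sup>2 * (cmod (f w))\<^sup>2 + 2 * (cmod (g w))\<^sup>2) summable_on UNIV"
    using ell2_summ[OF assms(1)] ell2_summ[OF assms(2)]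
    by (intro summable_on_add summable_on_cmult_right) auto
  have "(\<lambda>w. (cmod (c * f w + g w))\<^sup>2) summable_on UNIV"
  proof (rule summable_on_comparison_test[OF s])
    fix w
    have "(cmod (c * f w + g w))\<^sup>2 \<le> 2 * (cmod (c * f w))\<^sup>2 + 2 * (cmod (g w))\<^sup>2"
      by (rule sq_add_le)
    also have "\<dots> = 2 * (cmod c)\<^sup>2 * (cmod (f w))\<^sup>2 + 2 * (cmod (g w))\<^sup>2"
      by (simp add: norm_mult power_mult_distrib)
    finally show "(cmod (c * f w + g w))\<^sup>2 \<le> 2 * (cmod c)\<^sup>2 * (cmod (f w))\<^sup>2 + 2 * (cmod (g w))\<^sup>2" .
  qed simp
  moreover have "\<forall>w. c * f w + g w \<noteq> 0 \<longrightarrow> is_path G w"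
  proof (intro allI impI)
    fix w assume "c * f w + g w \<noteq> 0"
    hence "f w \<noteq> 0 \<or> g w \<noteq> 0" by auto
    thus "is_path G w" using ell2_supp[OF assms(1)] ell2_supp[OF assms(2)] by blast
  qed
  ultimately show ?thesis unfolding ell2_def by simp
qed

lemma add_ell2: "f \<in> ell2 G \<Longrightarrow> g \<in> ell2 G \<Longrightarrow> (\<lambda>w. f w + g w) \<in> ell2 G"
  using lincomb_ell2[of f G g 1] by simp

lemma scale_ell2: "f \<in> ell2 G \<Longrightarrow> (\<lambda>w. c * f w) \<in> ell2 G"
  using lincomb_ell2[of f G "\<lambda>_. 0" c] by simp

lemma infsq_nonneg: "0 \<le> infsum (\<lambda>w. (cmod (f w))\<^sup>2) UNIV"
  by (rule infsum_nonneg) simp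

lemma hnorm_nonneg[simp]: "0 \<le> hnorm f"
  unfolding hnorm_def using infsq_nonneg by simp

lemma hnorm_zero[simp]: "hnorm (\<lambda>_. 0) = 0"
  unfolding hnorm_def by simp


lemma hnorm_sq: "(hnorm f)\<^sup>2 = infsum (\<lambda>w. (cmod (f w))\<^sup>2) UNIV"
  unfolding hnorm_def using infsq_nonneg by simp

lemma hnorm_scale: "f \<in> ell2 G \<Longrightarrow> hnorm (\<lambda>w. c * f w) = cmod c * hnorm f"
proof -
  assume f: "f \<in> ell2 G"
  have "infsum (\<lambda>w. (cmod (c * f w))\<^sup>2) UNIV = infsum (\<lambda>w. (cmod c)\<^sup>2 * (cmod (f w))\<^sup>2) UNIV"
    by (simp add: norm_mult power_mult_distrib)
  also have "\<dots> = (cmod c)\<^sup>2 * infsum (\<lambda>w. (cmod (f w))\<^sup>2) UNIV"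
    by (rule infsum_cmult_right) (use ell2_summ[OF f] in auto)
  finally show ?thesis unfolding hnorm_def by (simp add: real_sqrt_mult)
qed

lemma point_le_hnorm:
  assumes "f \<in> ell2 G" shows "cmod (f w) \<le> hnorm f"
proof -
  have "sum (\<lambda>w. (cmod (f w))\<^sup>2) {w} \<le> infsum (\<lambda>w. (cmod (f w))\<^sup>2) UNIV"
    by (rule finite_sum_le_infsum) (use ell2_summ[OF assms] in auto)
  hence "(cmod (f w))\<^sup>2 \<le> infsum (\<lambda>w. (cmod (f w))\<^sup>2) UNIV" by simp
  thus ?thesis unfolding hnorm_def by (simp add: real_le_rsqrt)
qed

lemma L2_le_hnorm:
  assumes "f \<in> ell2 G" "finite F"
  shows "L2_set (\<lambda>w. cmod (f w)) F \<le> hnorm f"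
proof -
  have "sum (\<lambda>w. (cmod (f w))\<^sup>2) F \<le> infsum (\<lambda>w. (cmod (f w))\<^sup>2) UNIV"
    by (rule finite_sum_le_infsum) (use ell2_summ[OF assms(1)] assms(2) in auto)
  thus ?thesis unfolding hnorm_def L2_set_def by simp
qed

lemma hnorm_triangle:
  assumes f: "f \<in> ell2 G" and g: "g \<in> ell2 G"
  shows "hnorm (\<lambda>w. f w + g w) \<le> hnorm f + hnorm g"
proof -
  have "infsum (\<lambda>w. (cmod (f w + g w))\<^sup>2) UNIV \<le> (hnorm f + hnorm g)\<^sup>2"
  proof (rule infsum_le_finite_sums)
    show "(\<lambda>w. (cmod (f w + g w))\<^sup>2) summable_on UNIV"
      using ell2_summ[OF add_ell2[OF f g]] .
    fix F :: "('a \<times> 'b list) set" assume F: "finite F" "F \<subseteq> UNIV"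
    have "L2_set (\<lambda>w. cmod (f w + g w)) F \<le> L2_set (\<lambda>w. cmod (f w) + cmod (g w)) F"
      by (rule L2_set_mono) (auto simp: norm_triangle_ineq)
    also have "\<dots> \<le> L2_set (\<lambda>w. cmod (f w)) F + L2_set (\<lambda>w. cmod (g w)) F"
      by (rule L2_set_triangle_ineq)
    also have "\<dots> \<le> hnorm f + hnorm g"
      using L2_le_hnorm[OF f F(1)] L2_le_hnorm[OF g F(1)] by simp
    finally have "(L2_set (\<lambda>w. cmod (f w + g w)) F)\<^sup>2 \<le> (hnorm f + hnorm g)\<^sup>2"
      by (simp add: power_mono)
    thus "sum (\<lambda>w. (cmod (f w + g w))\<^sup>2) F \<le> (hnorm f + hnorm g)\<^sup>2"
      by (simp add: L2_set_def sum_nonneg)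
  qed
  hence "sqrt (infsum (\<lambda>w. (cmod (f w + g w))\<^sup>2) UNIV) \<le> sqrt ((hnorm f + hnorm g)\<^sup>2)"
    by (rule real_sqrt_le_mono)
  also have "\<dots> = hnorm f + hnorm g" by simp
  finally show ?thesis unfolding hnorm_def[of "\<lambda>w. f w + g w"] .
qed

lemma hnorm_eq0:
  assumes f: "f \<in> ell2 G" and h: "hnorm f = 0"
  shows "f = (\<lambda>_. 0)"
proof
  fix w
  have "cmod (f w) \<le> 0" using point_le_hnorm[OF f, of w] h by simp
  thus "f w = 0" by simp
qed

definition xi :: "('v, 'e) path \<Rightarrow> ('v, 'e) vect" where
  "xi p = (\<lambda>w. if w = p then 1 else 0)"

lemma xi_ell2: "is_path G p \<Longrightarrow> xi p \<in> ell2 G"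
proof -
  assume p: "is_path G p"
  have "(\<lambda>w. (cmod (xi p w))\<^sup>2) summable_on UNIV \<longleftrightarrow> (\<lambda>w. (cmod (xi p w))\<^sup>2) summable_on {p}"
    by (rule summable_on_cong_neutral) (auto simp: xi_def)
  thus ?thesis unfolding ell2_def using p by (auto simp: xi_def)
qed

lemma hnorm_xi: "hnorm (xi p) = 1"
proof -
  have "infsum (\<lambda>w. (cmod (xi p w))\<^sup>2) UNIV = infsum (\<lambda>w. (cmod (xi p w))\<^sup>2) {p}"
    by (rule infsum_cong_neutral) (auto simp: xi_def)
  thus ?thesis unfolding hnorm_def by (simp add: xi_def)
qed

lemma bop_ell2: "is_bop G A \<Longrightarrow> f \<in> ell2 G \<Longrightarrow> A f \<in> ell2 G"
  unfolding is_bop_def by blast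

lemma bop_out: "is_bop G A \<Longrightarrow> f \<notin> ell2 G \<Longrightarrow> A f = (\<lambda>_. 0)"
  unfolding is_bop_def by blast

lemma bop_lin: "is_bop G A \<Longrightarrow> f \<in> ell2 G \<Longrightarrow> g \<in> ell2 G \<Longrightarrow>
   A (\<lambda>w. c * f w + g w) = (\<lambda>w. c * A f w + A g w)"
  unfolding is_bop_def by blast

lemma bop_zero: "is_bop G A \<Longrightarrow> A (\<lambda>_. 0) = (\<lambda>_. 0)"
proof -
  assume A: "is_bop G A"
  have "A (\<lambda>w. 1 * 0 + 0) = (\<lambda>w. 1 * A (\<lambda>_. 0) w + A (\<lambda>_. 0) w)"
    by (rule bop_lin[OF A]) auto
  hence "A (\<lambda>_. 0) = (\<lambda>w. A (\<lambda>_. 0) w + A (\<lambda>_. 0) w)" by simp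
  hence "\<And>w. A (\<lambda>_. 0) w = A (\<lambda>_. 0) w + A (\<lambda>_. 0) w" by (rule fun_cong)
  thus ?thesis by (intro ext) simp
qed

lemma bop_scale: "is_bop G A \<Longrightarrow> f \<in> ell2 G \<Longrightarrow> A (\<lambda>w. c * f w) = (\<lambda>w. c * A f w)"
  using bop_lin[of G A f "\<lambda>_. 0" c] bop_zero[of G A] by simp

lemma bop_add: "is_bop G A \<Longrightarrow> f \<in> ell2 G \<Longrightarrow> g \<in> ell2 G \<Longrightarrow> A (\<lambda>w. f w + g w) = (\<lambda>w. A f w + A g w)"
  using bop_lin[of G A f g 1] by simp

lemma bop_bound: "is_bop G A \<Longrightarrow> \<exists>C\<ge>0. \<forall>f\<in>ell2 G. hnorm (A f) \<le> C * hnorm f"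
proof -
  assume "is_bop G A"
  then obtain C where C: "\<forall>f\<in>ell2 G. hnorm (A f) \<le> C * hnorm f" unfolding is_bop_def by blast
  have "\<forall>f\<in>ell2 G. hnorm (A f) \<le> max C 0 * hnorm f"
  proof
    fix f assume "f \<in> ell2 G"
    hence "hnorm (A f) \<le> C * hnorm f" using C by blast
    also have "\<dots> \<le> max C 0 * hnorm f" by (rule mult_right_mono) auto
    finally show "hnorm (A f) \<le> max C 0 * hnorm f" .
  qed
  thus ?thesis by (intro exI[of _ "max C 0"]) auto
qed

lemma opnorm_bdd: "is_bop G A \<Longrightarrow> bdd_above {hnorm (A f) | f. f \<in> ell2 G \<and> hnorm f \<le> 1}"
proof -
  assume "is_bop G A"
  then obtain C where C: "C \<ge> 0" "\<forall>f\<in>ell2 G. hnorm (A f) \<le> C * hnorm f" using bop_bound by blast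
  show ?thesis
  proof (rule bdd_aboveI[of _ C], clarify)
    fix f assume f: "f \<in> ell2 G" "hnorm f \<le> 1"
    have "hnorm (A f) \<le> C * hnorm f" using C f by blast
    also have "\<dots> \<le> C * 1" using C f by (intro mult_left_mono) auto
    finally show "hnorm (A f) \<le> C" by simp
  qed
qed

lemma opnorm_le: "is_bop G A \<Longrightarrow> f \<in> ell2 G \<Longrightarrow> hnorm f \<le> 1 \<Longrightarrow> hnorm (A f) \<le> opnorm G A"
  unfolding opnorm_def by (rule cSup_upper) (auto intro: opnorm_bdd)

lemma opnorm_nonneg: "is_bop G A \<Longrightarrow> 0 \<le> opnorm G A"
proof -
  assume A: "is_bop G A"
  have "hnorm (A (\<lambda>_. 0)) \<le> opnorm G A" by (rule opnorm_le[OF A]) auto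
  thus ?thesis using hnorm_nonneg[of "A (\<lambda>_. 0)"] by linarith
qed

lemma opnorm_leI:
  assumes "\<And>f. f \<in> ell2 G \<Longrightarrow> hnorm f \<le> 1 \<Longrightarrow> hnorm (A f) \<le> M"
  shows "opnorm G A \<le> M"
  unfolding opnorm_def
proof (rule cSup_least)
  show "{hnorm (A f) |f. f \<in> ell2 G \<and> hnorm f \<le> 1} \<noteq> {}"
  proof -
    have "hnorm (A (\<lambda>_. 0)) \<in> {hnorm (A f) |f. f \<in> ell2 G \<and> hnorm f \<le> 1}"
      using zero_ell2[of G] hnorm_zero by (intro CollectI exI[of _ "\<lambda>_. 0"]) simp
    thus ?thesis by (rule ex_in_conv[THEN iffD1, OF exI])
  qed
next
  fix z assume "z \<in> {hnorm (A f) |f. f \<in> ell2 G \<and> hnorm f \<le> 1}"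
  then obtain f where "z = hnorm (A f)" "f \<in> ell2 G" "hnorm f \<le> 1" by blast
  thus "z \<le> M" using assms by simp
qed

lemma opnorm_bound:
  assumes A: "is_bop G A" and f: "f \<in> ell2 G"
  shows "hnorm (A f) \<le> opnorm G A * hnorm f"
proof (cases "hnorm f = 0")
  case True
  hence "f = (\<lambda>_. 0)" using hnorm_eq0[OF f] by blast
  thus ?thesis using bop_zero[OF A] by simp
next
  case False
  hence hp: "hnorm f > 0" using hnorm_nonneg[of f] by linarith
  define c where "c = complex_of_real (1 / hnorm f)"
  have cm: "cmod c = 1 / hnorm f" using hp by (simp only: c_def norm_of_real) simp
  have g: "(\<lambda>w. c * f w) \<in> ell2 G" by (rule scale_ell2[OF f])
  have "hnorm (\<lambda>w. c * f w) = 1" using hnorm_scale[OF f, of c] cm hp by simp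
  hence "hnorm (A (\<lambda>w. c * f w)) \<le> opnorm G A" using opnorm_le[OF A g] by simp
  moreover have "A (\<lambda>w. c * f w) = (\<lambda>w. c * A f w)" by (rule bop_scale[OF A f])
  moreover have "hnorm (\<lambda>w. c * A f w) = hnorm (A f) / hnorm f"
    using hnorm_scale[OF bop_ell2[OF A f], of c] cm by simp
  ultimately have "hnorm (A f) / hnorm f \<le> opnorm G A" by simp
  thus ?thesis using hp by (simp add: divide_le_eq)
qed

lemma opnorm_point:
  assumes A: "is_bop G A" and f: "f \<in> ell2 G"
  shows "cmod (A f w) \<le> opnorm G A * hnorm f"
  using point_le_hnorm[OF bop_ell2[OF A f], of w] opnorm_bound[OF A f] by linarith

lemma opnorm_xi:
  assumes A: "is_bop G A" and p: "is_path G p"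
  shows "cmod (A (xi p) w) \<le> opnorm G A"
  using opnorm_point[OF A xi_ell2[OF p], of w] hnorm_xi[of p] by simp

lemma bop_op_add: assumes A: "is_bop G A" and B: "is_bop G B" shows "is_bop G (op_add A B)"
proof -
  obtain CA where CA: "CA \<ge> 0" "\<forall>f\<in>ell2 G. hnorm (A f) \<le> CA * hnorm f" using bop_bound[OF A] by blast
  obtain CB where CB: "CB \<ge> 0" "\<forall>f\<in>ell2 G. hnorm (B f) \<le> CB * hnorm f" using bop_bound[OF B] by blast
  have "\<forall>f\<in>ell2 G. hnorm (op_add A B f) \<le> (CA + CB) * hnorm f"
  proof
    fix f assume f: "f \<in> ell2 G"
    have "hnorm (op_add A B f) \<le> hnorm (A f) + hnorm (B f)"
      unfolding op_add_def by (rule hnorm_triangle[OF bop_ell2[OF A f] bop_ell2[OF B f]])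
    also have "\<dots> \<le> (CA + CB) * hnorm f" using CA CB f by (simp add: distrib_right add_mono)
    finally show "hnorm (op_add A B f) \<le> (CA + CB) * hnorm f" .
  qed
  moreover have "\<forall>f\<in>ell2 G. op_add A B f \<in> ell2 G"
    unfolding op_add_def using add_ell2 bop_ell2[OF A] bop_ell2[OF B] by blast
  moreover have "\<forall>f. f \<notin> ell2 G \<longrightarrow> op_add A B f = (\<lambda>_. 0)"
    unfolding op_add_def using bop_out[OF A] bop_out[OF B] by simp
  moreover have "\<forall>f\<in>ell2 G. \<forall>g\<in>ell2 G. \<forall>c::complex.
         op_add A B (\<lambda>w. c * f w + g w) = (\<lambda>w. c * op_add A B f w + op_add A B g w)"
    unfolding op_add_def using bop_lin[OF A] bop_lin[OF B] by (simp add: algebra_simps)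
  ultimately show ?thesis unfolding is_bop_def by blast
qed

lemma bop_op_scale: assumes A: "is_bop G A" shows "is_bop G (op_scale c A)"
proof -
  obtain CA where CA: "CA \<ge> 0" "\<forall>f\<in>ell2 G. hnorm (A f) \<le> CA * hnorm f" using bop_bound[OF A] by blast
  have "\<forall>f\<in>ell2 G. hnorm (op_scale c A f) \<le> (cmod c * CA) * hnorm f"
  proof
    fix f assume f: "f \<in> ell2 G"
    have "hnorm (op_scale c A f) = cmod c * hnorm (A f)"
      unfolding op_scale_def by (rule hnorm_scale[OF bop_ell2[OF A f]])
    also have "\<dots> \<le> cmod c * (CA * hnorm f)" using CA f by (intro mult_left_mono) auto
    finally show "hnorm (op_scale c A f) \<le> (cmod c * CA) * hnorm f" by simp
  qed
  moreover have "\<forall>f\<in>ell2 G. op_scale c A f \<in> ell2 G"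
    unfolding op_scale_def using scale_ell2 bop_ell2[OF A] by blast
  moreover have "\<forall>f. f \<notin> ell2 G \<longrightarrow> op_scale c A f = (\<lambda>_. 0)"
    unfolding op_scale_def using bop_out[OF A] by simp
  moreover have "\<forall>f\<in>ell2 G. \<forall>g\<in>ell2 G. \<forall>d::complex.
         op_scale c A (\<lambda>w. d * f w + g w) = (\<lambda>w. d * op_scale c A f w + op_scale c A g w)"
    unfolding op_scale_def using bop_lin[OF A] by (simp add: algebra_simps)
  ultimately show ?thesis unfolding is_bop_def by blast
qed

lemma bop_op_mult: assumes A: "is_bop G A" and B: "is_bop G B" shows "is_bop G (op_mult A B)"
proof -
  obtain CA where CA: "CA \<ge> 0" "\<forall>f\<in>ell2 G. hnorm (A f) \<le> CA * hnorm f" using bop_bound[OF A] by blast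
  obtain CB where CB: "CB \<ge> 0" "\<forall>f\<in>ell2 G. hnorm (B f) \<le> CB * hnorm f" using bop_bound[OF B] by blast
  have "\<forall>f\<in>ell2 G. hnorm (op_mult A B f) \<le> (CA * CB) * hnorm f"
  proof
    fix f assume f: "f \<in> ell2 G"
    have "hnorm (op_mult A B f) \<le> CA * hnorm (B f)" unfolding op_mult_def using CA bop_ell2[OF B f] by simp
    also have "\<dots> \<le> CA * (CB * hnorm f)" using CA CB f by (intro mult_left_mono) auto
    finally show "hnorm (op_mult A B f) \<le> (CA * CB) * hnorm f" by simp
  qed
  moreover have "\<forall>f\<in>ell2 G. op_mult A B f \<in> ell2 G"
    unfolding op_mult_def using bop_ell2[OF A] bop_ell2[OF B] by simp
  moreover have "\<forall>f. f \<notin> ell2 G \<longrightarrow> op_mult A B f = (\<lambda>_. 0)"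
    unfolding op_mult_def using bop_out[OF B] bop_zero[OF A] by simp
  moreover have "\<forall>f\<in>ell2 G. \<forall>g\<in>ell2 G. \<forall>d::complex.
         op_mult A B (\<lambda>w. d * f w + g w) = (\<lambda>w. d * op_mult A B f w + op_mult A B g w)"
    unfolding op_mult_def using bop_lin[OF A] bop_lin[OF B] bop_ell2[OF B] by simp
  ultimately show ?thesis unfolding is_bop_def by blast
qed

lemma bop_op_zero: "is_bop G op_zero"
  unfolding is_bop_def op_zero_def by (auto intro!: exI[of _ 0])

lemma bop_op_diff: "is_bop G A \<Longrightarrow> is_bop G B \<Longrightarrow> is_bop G (op_diff A B)"
  unfolding op_diff_def by (intro bop_op_add bop_op_scale)

lemma opnorm_add: assumes A: "is_bop G A" and B: "is_bop G B"
  shows "opnorm G (op_add A B) \<le> opnorm G A + opnorm G B"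
proof (rule opnorm_leI)
  fix f assume f: "f \<in> ell2 G" "hnorm f \<le> 1"
  have "hnorm (op_add A B f) \<le> hnorm (A f) + hnorm (B f)"
    unfolding op_add_def by (rule hnorm_triangle[OF bop_ell2[OF A f(1)] bop_ell2[OF B f(1)]])
  also have "\<dots> \<le> opnorm G A + opnorm G B" using opnorm_le[OF A f] opnorm_le[OF B f] by simp
  finally show "hnorm (op_add A B f) \<le> opnorm G A + opnorm G B" .
qed

lemma opnorm_scale: assumes A: "is_bop G A"
  shows "opnorm G (op_scale c A) \<le> cmod c * opnorm G A"
proof (rule opnorm_leI)
  fix f assume f: "f \<in> ell2 G" "hnorm f \<le> 1"
  have "hnorm (op_scale c A f) = cmod c * hnorm (A f)"
    unfolding op_scale_def by (rule hnorm_scale[OF bop_ell2[OF A f(1)]])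
  also have "\<dots> \<le> cmod c * opnorm G A" using opnorm_le[OF A f] by (simp add: mult_left_mono)
  finally show "hnorm (op_scale c A f) \<le> cmod c * opnorm G A" .
qed

lemma opnorm_mult: assumes A: "is_bop G A" and B: "is_bop G B"
  shows "opnorm G (op_mult A B) \<le> opnorm G A * opnorm G B"
proof (rule opnorm_leI)
  fix f assume f: "f \<in> ell2 G" "hnorm f \<le> 1"
  have "hnorm (op_mult A B f) \<le> opnorm G A * hnorm (B f)"
    unfolding op_mult_def using opnorm_bound[OF A bop_ell2[OF B f(1)]] by simp
  also have "\<dots> \<le> opnorm G A * opnorm G B"
    using opnorm_le[OF B f] opnorm_nonneg[OF A] by (simp add: mult_left_mono)
  finally show "hnorm (op_mult A B f) \<le> opnorm G A * opnorm G B" .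
qed

lemma opnorm_zero: "opnorm G op_zero = 0"
proof -
  have "opnorm G op_zero \<le> 0" by (rule opnorm_leI) (simp add: op_zero_def)
  thus ?thesis using opnorm_nonneg[OF bop_op_zero, of G] by simp
qed

lemma reindex_sq:
  fixes f g :: "('v, 'e) vect"
  assumes f: "f \<in> ell2 G" and inj: "inj_on h D"
    and gD: "\<And>w. w \<in> D \<Longrightarrow> g w = f (h w)" and gn: "\<And>w. w \<notin> D \<Longrightarrow> g w = 0"
  shows "(\<lambda>w. (cmod (g w))\<^sup>2) summable_on UNIV \<and> hnorm g \<le> hnorm f"
proof -
  let ?F = "\<lambda>w. (cmod (f w))\<^sup>2" and ?g = "\<lambda>w. (cmod (g w))\<^sup>2"
  have sF: "?F summable_on UNIV" using ell2_summ[OF f] .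
  have e1: "?g summable_on UNIV \<longleftrightarrow> ?g summable_on D"
    by (rule summable_on_cong_neutral) (auto simp: gn)
  have e2: "?g summable_on D \<longleftrightarrow> (?F \<circ> h) summable_on D"
    by (rule summable_on_cong) (simp add: gD)
  have sFh: "?F summable_on (h ` D)" by (rule summable_on_subset[OF sF]) simp
  hence "(?F \<circ> h) summable_on D" using summable_on_reindex[OF inj] by blast
  hence sg: "?g summable_on UNIV" using e1 e2 by simp
  have "infsum ?g UNIV = infsum ?g D"
    by (rule infsum_cong_neutral) (auto simp: gn)
  also have "\<dots> = infsum (?F \<circ> h) D" by (rule infsum_cong) (simp add: gD)
  also have "\<dots> = infsum ?F (h ` D)" by (rule infsum_reindex[OF inj, symmetric])
  also have "\<dots> \<le> infsum ?F UNIV"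
    by (rule infsum_mono_neutral[OF sFh sF]) auto
  finally show ?thesis using sg unfolding hnorm_def by (simp add: real_sqrt_le_mono)
qed

lemma L_apply: "f \<in> ell2 G \<Longrightarrow> L G e f = (\<lambda>w. if is_path G w \<and> snd w \<noteq> [] \<and> hd (snd w) = e
                    then f (src G e, tl (snd w)) else 0)"
  unfolding L_def by simp

lemma L_out: "f \<notin> ell2 G \<Longrightarrow> L G e f = (\<lambda>_. 0)"
  unfolding L_def by simp

lemma P_apply: "f \<in> ell2 G \<Longrightarrow> P G v f = (\<lambda>w. if fst w = v then f w else 0)"
  unfolding P_def by simp

lemma P_out: "f \<notin> ell2 G \<Longrightarrow> P G v f = (\<lambda>_. 0)"
  unfolding P_def by simp

lemma L_ell2_norm:
  assumes f: "f \<in> ell2 G"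
  shows "L G e f \<in> ell2 G \<and> hnorm (L G e f) \<le> hnorm f"
proof -
  let ?D = "{w. is_path G w \<and> snd w \<noteq> [] \<and> hd (snd w) = e}"
  let ?h = "\<lambda>w::('a,'b) path. (src G e, tl (snd w))"
  have inj: "inj_on ?h ?D"
  proof (rule inj_onI)
    fix u w assume u: "u \<in> ?D" and w: "w \<in> ?D" and eq: "?h u = ?h w"
    obtain a us where ua: "u = (a, us)" by fastforce
    obtain b ws where wb: "w = (b, ws)" by fastforce
    have "us = ws" using u w eq ua wb by (cases us; cases ws) auto
    moreover have "a = rng G e" using u ua unfolding is_path_def by auto
    moreover have "b = rng G e" using w wb unfolding is_path_def by auto
    ultimately show "u = w" using ua wb by simp
  qed
  have r: "(\<lambda>w. (cmod (L G e f w))\<^sup>2) summable_on UNIV \<and> hnorm (L G e f) \<le> hnorm f"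
    by (rule reindex_sq[OF f inj]) (auto simp: L_apply[OF f])
  moreover have "\<forall>w. L G e f w \<noteq> 0 \<longrightarrow> is_path G w"
    by (auto simp: L_apply[OF f] split: if_splits)
  ultimately show ?thesis unfolding ell2_def by simp
qed

lemma bop_L: "is_bop G (L G e)"
  unfolding is_bop_def
proof (intro conjI)
  show "\<forall>f\<in>ell2 G. \<forall>g\<in>ell2 G. \<forall>c::complex.
         L G e (\<lambda>w. c * f w + g w) = (\<lambda>w. c * L G e f w + L G e g w)"
    by (auto simp: L_apply lincomb_ell2)
  show "\<exists>C. \<forall>f\<in>ell2 G. hnorm (L G e f) \<le> C * hnorm f"
  proof (intro exI[of _ 1] ballI)
    fix f assume "f \<in> ell2 G" thus "hnorm (L G e f) \<le> 1 * hnorm f" using L_ell2_norm[of f G e] by simp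
  qed
  show "\<forall>f\<in>ell2 G. L G e f \<in> ell2 G"
  proof
    fix f assume "f \<in> ell2 G" thus "L G e f \<in> ell2 G" using L_ell2_norm[of f G e] by simp
  qed
  show "\<forall>f. f \<notin> ell2 G \<longrightarrow> L G e f = (\<lambda>_. 0)"
  proof (intro allI impI)
    fix f assume "f \<notin> ell2 G" thus "L G e f = (\<lambda>_. 0)" by (rule L_out)
  qed
qed

lemma P_ell2_norm:
  assumes f: "f \<in> ell2 G"
  shows "P G v f \<in> ell2 G \<and> hnorm (P G v f) \<le> hnorm f"
proof -
  let ?F = "\<lambda>w. (cmod (f w))\<^sup>2" and ?g = "\<lambda>w. (cmod (P G v f w))\<^sup>2"
  have sF: "?F summable_on UNIV" using ell2_summ[OF f] .
  have sg: "?g summable_on UNIV"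
    by (rule summable_on_comparison_test[OF sF]) (auto simp: P_apply[OF f])
  have "infsum ?g UNIV \<le> infsum ?F UNIV"
    by (rule infsum_mono[OF sg sF]) (auto simp: P_apply[OF f])
  hence "hnorm (P G v f) \<le> hnorm f" unfolding hnorm_def by (simp add: real_sqrt_le_mono)
  moreover have "\<forall>w. P G v f w \<noteq> 0 \<longrightarrow> is_path G w"
    using ell2_supp[OF f] by (auto simp: P_apply[OF f])
  ultimately show ?thesis unfolding ell2_def using sg by simp
qed

lemma bop_P: "is_bop G (P G v)"
  unfolding is_bop_def
proof (intro conjI)
  show "\<forall>f\<in>ell2 G. \<forall>g\<in>ell2 G. \<forall>c::complex.
         P G v (\<lambda>w. c * f w + g w) = (\<lambda>w. c * P G v f w + P G v g w)"
    by (auto simp: P_apply lincomb_ell2)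
  show "\<exists>C. \<forall>f\<in>ell2 G. hnorm (P G v f) \<le> C * hnorm f"
  proof (intro exI[of _ 1] ballI)
    fix f assume "f \<in> ell2 G" thus "hnorm (P G v f) \<le> 1 * hnorm f" using P_ell2_norm[of f G v] by simp
  qed
  show "\<forall>f\<in>ell2 G. P G v f \<in> ell2 G"
  proof
    fix f assume "f \<in> ell2 G" thus "P G v f \<in> ell2 G" using P_ell2_norm[of f G v] by simp
  qed
  show "\<forall>f. f \<notin> ell2 G \<longrightarrow> P G v f = (\<lambda>_. 0)"
  proof (intro allI impI)
    fix f assume "f \<notin> ell2 G" thus "P G v f = (\<lambda>_. 0)" by (rule P_out)
  qed
qed

lemma opnorm_P: "opnorm G (P G v) \<le> 1"
proof (rule opnorm_leI)
  fix f assume f: "f \<in> ell2 G" "hnorm f \<le> 1"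
  have "hnorm (P G v f) \<le> hnorm f" using P_ell2_norm[OF f(1)] by simp
  thus "hnorm (P G v f) \<le> 1" using f(2) by linarith
qed

abbreviation gens :: "('v, 'e) digraph \<Rightarrow> ('v, 'e) oper set" where
  "gens G \<equiv> L G ` edges G \<union> P G ` verts G"

lemma alg_gen_bop: "B \<in> alg_gen (gens G) \<Longrightarrow> is_bop G B"
  by (induction rule: alg_gen.induct) (auto intro: bop_L bop_P bop_op_add bop_op_scale bop_op_mult)

lemma diff_self: "op_diff B B = op_zero"
  unfolding op_diff_def op_add_def op_scale_def op_zero_def by simp

lemma alg_gen_T: "B \<in> alg_gen (gens G) \<Longrightarrow> B \<in> Tplus G"
proof -
  assume B: "B \<in> alg_gen (gens G)"
  have "\<forall>\<epsilon>>0. \<exists>C\<in>alg_gen (gens G). opnorm G (op_diff B C) < \<epsilon>"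
  proof (intro allI impI)
    fix e :: real assume "e > 0"
    thus "\<exists>C\<in>alg_gen (gens G). opnorm G (op_diff B C) < e"
      using B diff_self[of B] opnorm_zero[of G] by (intro bexI[of _ B]) auto
  qed
  thus ?thesis unfolding Tplus_def using alg_gen_bop[OF B] by simp
qed

lemma L_T: "L G e \<in> Tplus G" if "e \<in> edges G"
  using that by (intro alg_gen_T alg_gen.gen) auto

lemma P_T: "P G v \<in> Tplus G" if "v \<in> verts G"
  using that by (intro alg_gen_T alg_gen.gen) auto

lemma T_bop: "A \<in> Tplus G \<Longrightarrow> is_bop G A"
  unfolding Tplus_def by simp

lemma T_approx: "A \<in> Tplus G \<Longrightarrow> \<epsilon> > 0 \<Longrightarrow> \<exists>B\<in>alg_gen (gens G). opnorm G (op_diff A B) < \<epsilon>"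
  unfolding Tplus_def by simp

lemma T_add: assumes A: "A \<in> Tplus G" and B: "B \<in> Tplus G" shows "op_add A B \<in> Tplus G"
  unfolding Tplus_def
proof (safe)
  show "is_bop G (op_add A B)" using T_bop[OF A] T_bop[OF B] by (rule bop_op_add)
  fix e :: real assume e: "e > 0"
  obtain A' where A': "A' \<in> alg_gen (gens G)" "opnorm G (op_diff A A') < e/2" using T_approx[OF A, of "e/2"] e by auto
  obtain B' where B': "B' \<in> alg_gen (gens G)" "opnorm G (op_diff B B') < e/2" using T_approx[OF B, of "e/2"] e by auto
  have eq: "op_diff (op_add A B) (op_add A' B') = op_add (op_diff A A') (op_diff B B')"
    unfolding op_diff_def op_add_def op_scale_def by (intro ext) (simp add: algebra_simps)
  have "opnorm G (op_diff (op_add A B) (op_add A' B')) \<le> opnorm G (op_diff A A') + opnorm G (op_diff B B')"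
    unfolding eq by (intro opnorm_add bop_op_diff T_bop A B alg_gen_bop A'(1) B'(1))
  also have "\<dots> < e" using A' B' by simp
  finally show "\<exists>C\<in>alg_gen (gens G). opnorm G (op_diff (op_add A B) C) < e"
    using A'(1) B'(1) by (intro bexI[of _ "op_add A' B'"] alg_gen.add) auto
qed

lemma T_scale: assumes A: "A \<in> Tplus G" shows "op_scale c A \<in> Tplus G"
  unfolding Tplus_def
proof (safe)
  show "is_bop G (op_scale c A)" using T_bop[OF A] by (rule bop_op_scale)
  fix e :: real assume e: "e > 0"
  obtain A' where A': "A' \<in> alg_gen (gens G)" "opnorm G (op_diff A A') < e/(cmod c + 1)"
  proof -
    have "cmod c + 1 > 0" by (simp add: add_nonneg_pos)
    hence "e/(cmod c + 1) > 0" using e by simp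
    thus ?thesis using T_approx[OF A, of "e/(cmod c + 1)"] that by blast
  qed
  have eq: "op_diff (op_scale c A) (op_scale c A') = op_scale c (op_diff A A')"
    unfolding op_diff_def op_add_def op_scale_def by (intro ext) (simp add: algebra_simps)
  have "opnorm G (op_diff (op_scale c A) (op_scale c A')) \<le> cmod c * opnorm G (op_diff A A')"
    unfolding eq by (intro opnorm_scale bop_op_diff T_bop A alg_gen_bop A'(1))
  also have "\<dots> \<le> (cmod c + 1) * opnorm G (op_diff A A')"
    using opnorm_nonneg[OF bop_op_diff[OF T_bop[OF A] alg_gen_bop[OF A'(1)]]] by (simp add: mult_right_mono)
  also have "\<dots> < e"
  proof -
    have cp: "cmod c + 1 > 0" by (simp add: add_nonneg_pos)
    hence "opnorm G (op_diff A A') * (cmod c + 1) < e" using A'(2) by (simp add: pos_less_divide_eq)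
    thus ?thesis by (simp add: mult.commute)
  qed
  finally show "\<exists>C\<in>alg_gen (gens G). opnorm G (op_diff (op_scale c A) C) < e"
    using A'(1) by (intro bexI[of _ "op_scale c A'"] alg_gen.scale) auto
qed

lemma bop_diff_lin: "is_bop G A \<Longrightarrow> g \<in> ell2 G \<Longrightarrow> h \<in> ell2 G \<Longrightarrow>
   A (\<lambda>w. g w + -1 * h w) = (\<lambda>w. A g w + -1 * A h w)"
  using bop_lin[of G A h g "-1"] by (simp add: add.commute)

lemma T_mult: assumes A: "A \<in> Tplus G" and B: "B \<in> Tplus G" shows "op_mult A B \<in> Tplus G"
  unfolding Tplus_def
proof (safe)
  have bA: "is_bop G A" and bB: "is_bop G B" using T_bop A B by auto
  show "is_bop G (op_mult A B)" using bA bB by (rule bop_op_mult)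
  fix e :: real assume e: "e > 0"
  define nA where "nA = opnorm G A"
  define nB where "nB = opnorm G B"
  have nA: "nA \<ge> 0" "nB \<ge> 0" unfolding nA_def nB_def using opnorm_nonneg bA bB by auto
  define dB where "dB = min 1 (e / (2 * (nA + 1)))"
  have dB3: "dB * (nA + 1) \<le> e / 2"
  proof -
    have "dB \<le> e/(2*(nA+1))" by (simp add: dB_def)
    hence "dB*(nA+1) \<le> e/(2*(nA+1)) * (nA+1)" by (rule mult_right_mono) (use nA in simp)
    also have "\<dots> = e/2" using nA by (simp add: field_simps)
    finally show ?thesis .
  qed
  have dB: "dB > 0" "dB \<le> 1" "dB * (nA + 1) \<le> e / 2" unfolding dB_def using e nA dB3
    by (auto simp: dB_def)
  obtain B' where B': "B' \<in> alg_gen (gens G)" "opnorm G (op_diff B B') < dB" using T_approx[OF B, of dB] dB by auto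
  define dA where "dA = e / (2 * (nB + 2))"
  have dA: "dA > 0" "dA * (nB + 2) = e / 2" unfolding dA_def using e nA by (auto simp: field_simps)
  obtain A' where A': "A' \<in> alg_gen (gens G)" "opnorm G (op_diff A A') < dA" using T_approx[OF A, of dA] dA by auto
  have bA': "is_bop G A'" and bB': "is_bop G B'" using alg_gen_bop A'(1) B'(1) by auto
  have bdA: "is_bop G (op_diff A A')" and bdB: "is_bop G (op_diff B B')" using bA bB bA' bB' bop_op_diff by auto
  have eq: "op_diff (op_mult A B) (op_mult A' B') = op_add (op_mult A (op_diff B B')) (op_mult (op_diff A A') B')"
  proof (intro ext)
    fix f w
    show "op_diff (op_mult A B) (op_mult A' B') f w = op_add (op_mult A (op_diff B B')) (op_mult (op_diff A A') B') f w"
    proof (cases "f \<in> ell2 G")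
      case True
      have "A (\<lambda>w. B f w + -1 * B' f w) = (\<lambda>w. A (B f) w + -1 * A (B' f) w)"
        by (rule bop_diff_lin[OF bA bop_ell2[OF bB True] bop_ell2[OF bB' True]])
      thus ?thesis unfolding op_diff_def op_add_def op_scale_def op_mult_def by simp
    next
      case False
      thus ?thesis unfolding op_diff_def op_add_def op_scale_def op_mult_def
        using bop_out[OF bB False] bop_out[OF bB' False] bop_zero[OF bA] bop_zero[OF bA'] by simp
    qed
  qed
  have eqB': "B' = op_add B (op_scale (-1) (op_diff B B'))"
    unfolding op_diff_def op_add_def op_scale_def by (intro ext) simp
  have nB': "opnorm G B' \<le> nB + 1"
  proof -
    have "opnorm G B' \<le> opnorm G B + opnorm G (op_scale (-1) (op_diff B B'))"
      by (subst eqB') (intro opnorm_add bB bop_op_scale bdB)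
    also have "\<dots> \<le> nB + 1 * opnorm G (op_diff B B')"
      using opnorm_scale[OF bdB, of "-1"] unfolding nB_def by simp
    finally show ?thesis using B'(2) dB by simp
  qed
  have "opnorm G (op_diff (op_mult A B) (op_mult A' B')) \<le>
      opnorm G (op_mult A (op_diff B B')) + opnorm G (op_mult (op_diff A A') B')"
    unfolding eq by (intro opnorm_add bop_op_mult bA bB' bdA bdB)
  also have "\<dots> \<le> nA * opnorm G (op_diff B B') + opnorm G (op_diff A A') * opnorm G B'"
    using opnorm_mult[OF bA bdB] opnorm_mult[OF bdA bB'] unfolding nA_def by simp
  also have "\<dots> \<le> nA * dB + dA * (nB + 1)"
  proof (intro add_mono mult_mono)
    show "opnorm G (op_diff B B') \<le> dB" using B' by simp
    show "opnorm G (op_diff A A') \<le> dA" using A' by simp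
  qed (use nA nB' opnorm_nonneg[OF bB'] opnorm_nonneg[OF bdA] opnorm_nonneg[OF bdB] dA in auto)
  also have "\<dots> < e"
  proof -
    have "nA * dB \<le> dB * (nA + 1)" using dB by (simp add: algebra_simps)
    moreover have "dA * (nB + 1) < dA * (nB + 2)" using dA by simp
    ultimately show ?thesis using dB dA by linarith
  qed
  finally show "\<exists>C\<in>alg_gen (gens G). opnorm G (op_diff (op_mult A B) C) < e"
    using A'(1) B'(1) by (intro bexI[of _ "op_mult A' B'"] alg_gen.mult) auto
qed

definition pie :: "('v,'e) digraph \<Rightarrow> 'v \<Rightarrow> 'v \<Rightarrow> 'e \<Rightarrow> ('v,'e) oper \<Rightarrow> complex^2^2" where
  "pie G x y e A = (\<chi> i j. if i = 1 \<and> j = 1 then A (xi (x,[])) (x,[])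
      else if i = 2 \<and> j = 1 then A (xi (x,[])) (y,[e])
      else if i = 2 \<and> j = 2 then A (xi (y,[])) (y,[]) else 0)"

lemma two_ne_one[simp]: "(2::2) \<noteq> 1" "(1::2) \<noteq> 2" by simp_all

lemma pie_11[simp]: "pie G x y e A $ 1 $ 1 = A (xi (x,[])) (x,[])"
  and pie_21[simp]: "pie G x y e A $ 2 $ 1 = A (xi (x,[])) (y,[e])"
  and pie_22[simp]: "pie G x y e A $ 2 $ 2 = A (xi (y,[])) (y,[])"
  and pie_12[simp]: "pie G x y e A $ 1 $ 2 = 0"
  unfolding pie_def by simp_all

lemma mat22_eq: "(M::'a^2^2) = N \<longleftrightarrow> M$1$1 = N$1$1 \<and> M$1$2 = N$1$2 \<and> M$2$1 = N$2$1 \<and> M$2$2 = N$2$2"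
  by (auto simp: vec_eq_iff forall_2)

lemma mm_entries:
  fixes A B :: "'a::semiring_1^2^2"
  shows "(A ** B)$1$1 = A$1$1 * B$1$1 + A$1$2 * B$2$1"
    "(A ** B)$1$2 = A$1$1 * B$1$2 + A$1$2 * B$2$2"
    "(A ** B)$2$1 = A$2$1 * B$1$1 + A$2$2 * B$2$1"
    "(A ** B)$2$2 = A$2$1 * B$1$2 + A$2$2 * B$2$2"
  by (simp_all add: matrix_matrix_mult_def sum_2)

lemma mat_entries:
  "(mat c :: 'a::zero^2^2)$1$1 = c" "(mat c :: 'a::zero^2^2)$2$2 = c"
  "(mat c :: 'a::zero^2^2)$1$2 = 0" "(mat c :: 'a::zero^2^2)$2$1 = 0"
  by (simp_all add: mat_def)

lemma norm_vec2: "norm (v :: 'a::real_normed_vector^2) \<le> norm (v$1) + norm (v$2)"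
proof -
  have "norm v = L2_set (\<lambda>i. norm (v$i)) UNIV" by (simp add: norm_vec_def)
  also have "\<dots> \<le> sum (\<lambda>i. norm (v$i)) UNIV" by (rule L2_set_le_sum) simp
  finally show ?thesis by (simp add: sum_2)
qed

lemma norm_mat2: "norm (M :: complex^2^2) \<le> cmod (M$1$1) + cmod (M$1$2) + cmod (M$2$1) + cmod (M$2$2)"
  using norm_vec2[of M] norm_vec2[of "M$1"] norm_vec2[of "M$2"] by simp

definition phi :: "('v,'e) digraph \<Rightarrow> 'v \<Rightarrow> 'v \<Rightarrow> 'e \<Rightarrow> ('v,'e) oper \<Rightarrow> bool" where
  "phi G x y e A \<longleftrightarrow> (\<forall>f\<in>ell2 G.
     A f (x,[]) = A (xi (x,[])) (x,[]) * f (x,[]) \<and>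
     A f (y,[]) = A (xi (y,[])) (y,[]) * f (y,[]) \<and>
     A f (y,[e]) = A (xi (x,[])) (y,[e]) * f (x,[]) + A (xi (y,[])) (y,[]) * f (y,[e]))"

definition phi' :: "('v,'e) digraph \<Rightarrow> 'v \<Rightarrow> 'v \<Rightarrow> 'e \<Rightarrow> ('v,'e) oper \<Rightarrow> bool" where
  "phi' G x y e A \<longleftrightarrow> (\<exists>a b c. \<forall>f\<in>ell2 G.
     A f (x,[]) = a * f (x,[]) \<and> A f (y,[]) = c * f (y,[]) \<and> A f (y,[e]) = b * f (x,[]) + c * f (y,[e]))"

context
  fixes G :: "('v,'e) digraph" and x y :: 'v and e :: 'e
  assumes xv: "x \<in> verts G" and yv: "y \<in> verts G" and xy: "x \<noteq> y"
    and eE: "e \<in> edges_from_to G x y"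
begin

lemma e_edge: "e \<in> edges G" and e_src: "src G e = x" and e_rng: "rng G e = y"
  using eE unfolding edges_from_to_def by auto

lemma path_x0: "is_path G (x,[])" using xv unfolding is_path_def by simp
lemma path_y0: "is_path G (y,[])" using yv unfolding is_path_def by simp
lemma path_ep: "is_path G (y,[e])" using e_edge e_rng unfolding is_path_def by simp

lemma xix: "xi (x,[]) \<in> ell2 G" by (rule xi_ell2[OF path_x0])
lemma xiy: "xi (y,[]) \<in> ell2 G" by (rule xi_ell2[OF path_y0])

lemma phi'_phi: "phi' G x y e A \<Longrightarrow> phi G x y e A"
proof -
  assume "phi' G x y e A"
  then obtain a b c where H: "\<forall>f\<in>ell2 G. A f (x,[]) = a * f (x,[]) \<and> A f (y,[]) = c * f (y,[]) \<and> A f (y,[e]) = b * f (x,[]) + c * f (y,[e])"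
    unfolding phi'_def by blast
  have a: "A (xi (x,[])) (x,[]) = a" using H xix by (simp add: xi_def)
  have b: "A (xi (x,[])) (y,[e]) = b" using H xix xy by (simp add: xi_def)
  have c: "A (xi (y,[])) (y,[]) = c" using H xiy by (simp add: xi_def)
  show ?thesis unfolding phi_def a b c using H by blast
qed

lemma phi'_gen: "A \<in> alg_gen (gens G) \<Longrightarrow> phi' G x y e A"
proof (induction rule: alg_gen.induct)
  case (gen A)
  then consider (L) e' where "e' \<in> edges G" "A = L G e'" | (P) v where "v \<in> verts G" "A = P G v" by blast
  thus ?case
  proof cases
    case L
    show ?thesis unfolding phi'_def
      by (rule exI[of _ 0], rule exI[of _ "if e' = e then 1 else 0"], rule exI[of _ 0])
         (auto simp: L L_apply path_ep e_src)
  next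
    case P
    show ?thesis unfolding phi'_def
      by (rule exI[of _ "if x = v then 1 else 0"], rule exI[of _ 0], rule exI[of _ "if y = v then 1 else 0"])
         (auto simp: P P_apply)
  qed
next
  case (add A B)
  then obtain a b c a' b' c' where
    HA: "\<forall>f\<in>ell2 G. A f (x,[]) = a * f (x,[]) \<and> A f (y,[]) = c * f (y,[]) \<and> A f (y,[e]) = b * f (x,[]) + c * f (y,[e])" and
    HB: "\<forall>f\<in>ell2 G. B f (x,[]) = a' * f (x,[]) \<and> B f (y,[]) = c' * f (y,[]) \<and> B f (y,[e]) = b' * f (x,[]) + c' * f (y,[e])"
    unfolding phi'_def by blast
  show ?case unfolding phi'_def
    by (rule exI[of _ "a + a'"], rule exI[of _ "b + b'"], rule exI[of _ "c + c'"])
       (simp add: op_add_def HA HB algebra_simps)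
next
  case (scale A d)
  then obtain a b c where
    HA: "\<forall>f\<in>ell2 G. A f (x,[]) = a * f (x,[]) \<and> A f (y,[]) = c * f (y,[]) \<and> A f (y,[e]) = b * f (x,[]) + c * f (y,[e])"
    unfolding phi'_def by blast
  show ?case unfolding phi'_def
    by (rule exI[of _ "d * a"], rule exI[of _ "d * b"], rule exI[of _ "d * c"])
       (simp add: op_scale_def HA algebra_simps)
next
  case (mult A B)
  then obtain a b c a' b' c' where
    HA: "\<forall>f\<in>ell2 G. A f (x,[]) = a * f (x,[]) \<and> A f (y,[]) = c * f (y,[]) \<and> A f (y,[e]) = b * f (x,[]) + c * f (y,[e])" and
    HB: "\<forall>f\<in>ell2 G. B f (x,[]) = a' * f (x,[]) \<and> B f (y,[]) = c' * f (y,[]) \<and> B f (y,[e]) = b' * f (x,[]) + c' * f (y,[e])"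
    unfolding phi'_def by blast
  have bB: "is_bop G B" using mult.hyps(2) by (rule alg_gen_bop)
  show ?case unfolding phi'_def
  proof (rule exI[of _ "a * a'"], rule exI[of _ "b * a' + c * b'"], rule exI[of _ "c * c'"], intro ballI)
    fix f assume f: "f \<in> ell2 G"
    have Bf: "B f \<in> ell2 G" by (rule bop_ell2[OF bB f])
    show "op_mult A B f (x, []) = a * a' * f (x, []) \<and>
          op_mult A B f (y, []) = c * c' * f (y, []) \<and>
          op_mult A B f (y, [e]) = (b * a' + c * b') * f (x, []) + c * c' * f (y, [e])"
      using HA[rule_format, OF Bf] HB[rule_format, OF f] by (simp add: op_mult_def algebra_simps)
  qed
qed

lemma diff_point: "is_bop G A \<Longrightarrow> is_bop G B \<Longrightarrow> g \<in> ell2 G \<Longrightarrow>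
  cmod (A g w - B g w) \<le> opnorm G (op_diff A B) * hnorm g"
  using opnorm_point[OF bop_op_diff, of G A B g w]
  by (simp add: op_diff_def op_add_def op_scale_def)

lemma small_zero: assumes "\<And>d. d > 0 \<Longrightarrow> cmod z \<le> d * K" shows "z = 0"
proof (rule ccontr)
  assume "z \<noteq> 0"
  hence zp: "cmod z > 0" by simp
  define d where "d = cmod z / (2 * (\<bar>K\<bar> + 1))"
  have dp: "d > 0" unfolding d_def using zp by (simp add: add_nonneg_pos)
  have "cmod z \<le> d * K" using assms[OF dp] .
  also have "\<dots> \<le> d * (\<bar>K\<bar> + 1)" using dp by (intro mult_left_mono) auto
  also have "\<dots> = cmod z / 2" unfolding d_def by (simp add: field_simps add_nonneg_pos)
  finally show False using zp by simp
qed

lemma phi_T: assumes A: "A \<in> Tplus G" shows "phi G x y e A"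
  unfolding phi_def
proof (intro ballI conjI)
  fix f assume f: "f \<in> ell2 G"
  have bA: "is_bop G A" using A by (rule T_bop)
  have approx: "\<And>d. d > 0 \<Longrightarrow> \<exists>B. is_bop G B \<and> phi G x y e B \<and> opnorm G (op_diff A B) < d"
  proof -
    fix d :: real assume "d > 0"
    then obtain B where B: "B \<in> alg_gen (gens G)" "opnorm G (op_diff A B) < d" using T_approx[OF A] by blast
    thus "\<exists>B. is_bop G B \<and> phi G x y e B \<and> opnorm G (op_diff A B) < d"
      using alg_gen_bop phi'_phi phi'_gen by blast
  qed
  let ?x = "(x, []) :: ('v,'e) path" and ?y = "(y, []) :: ('v,'e) path" and ?e = "(y,[e]) :: ('v,'e) path"
  let ?K = "hnorm f + cmod (f ?x) + cmod (f ?y) + cmod (f ?e)"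
  have key: "\<And>d. d > 0 \<Longrightarrow> cmod (A f ?x - A (xi ?x) ?x * f ?x) \<le> d * ?K \<and>
       cmod (A f ?y - A (xi ?y) ?y * f ?y) \<le> d * ?K \<and>
       cmod (A f ?e - (A (xi ?x) ?e * f ?x + A (xi ?y) ?y * f ?e)) \<le> d * ?K"
  proof -
    fix d :: real assume dp: "d > 0"
    then obtain B where B: "is_bop G B" "phi G x y e B" "opnorm G (op_diff A B) < d" using approx by blast
    define n where "n = opnorm G (op_diff A B)"
    have n: "0 \<le> n" "n \<le> d" unfolding n_def using B opnorm_nonneg[OF bop_op_diff[OF bA B(1)]] by auto
    have Bf: "B f ?x = B (xi ?x) ?x * f ?x" "B f ?y = B (xi ?y) ?y * f ?y"
      "B f ?e = B (xi ?x) ?e * f ?x + B (xi ?y) ?y * f ?e" using B(2) f unfolding phi_def by auto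
    have d1: "cmod (A f w - B f w) \<le> n * hnorm f" for w using diff_point[OF bA B(1) f] n_def by simp
    have d2: "cmod (A (xi ?x) w - B (xi ?x) w) \<le> n" for w using diff_point[OF bA B(1) xix, of w] hnorm_xi n_def by (metis mult.right_neutral)
    have d3: "cmod (A (xi ?y) w - B (xi ?y) w) \<le> n" for w using diff_point[OF bA B(1) xiy, of w] hnorm_xi n_def by (metis mult.right_neutral)
    have K0: "0 \<le> hnorm f" "0 \<le> cmod (f ?x)" "0 \<le> cmod (f ?y)" "0 \<le> cmod (f ?e)" by auto
    have m1: "cmod ((A (xi ?x) w - B (xi ?x) w) * f p) \<le> n * cmod (f p)" for w p
      using d2[of w] by (simp add: norm_mult mult_right_mono)
    have m2: "cmod ((A (xi ?y) w - B (xi ?y) w) * f p) \<le> n * cmod (f p)" for w p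
      using d3[of w] by (simp add: norm_mult mult_right_mono)
    have "cmod (A f ?x - A (xi ?x) ?x * f ?x) = cmod ((A f ?x - B f ?x) - (A (xi ?x) ?x - B (xi ?x) ?x) * f ?x)"
      using Bf by (simp add: algebra_simps)
    also have "\<dots> \<le> n * hnorm f + n * cmod (f ?x)"
      using norm_triangle_ineq4[of "A f ?x - B f ?x" "(A (xi ?x) ?x - B (xi ?x) ?x) * f ?x"] d1[of ?x] m1[of ?x ?x] by linarith
    also have "\<dots> \<le> n * ?K" using n K0 by (simp add: algebra_simps mult_left_mono)
    also have "\<dots> \<le> d * ?K" using n K0 by (intro mult_right_mono) auto
    finally have r1: "cmod (A f ?x - A (xi ?x) ?x * f ?x) \<le> d * ?K" .
    have "cmod (A f ?y - A (xi ?y) ?y * f ?y) = cmod ((A f ?y - B f ?y) - (A (xi ?y) ?y - B (xi ?y) ?y) * f ?y)"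
      using Bf by (simp add: algebra_simps)
    also have "\<dots> \<le> n * hnorm f + n * cmod (f ?y)"
      using norm_triangle_ineq4[of "A f ?y - B f ?y" "(A (xi ?y) ?y - B (xi ?y) ?y) * f ?y"] d1[of ?y] m2[of ?y ?y] by linarith
    also have "\<dots> \<le> n * ?K" using n K0 by (simp add: algebra_simps mult_left_mono)
    also have "\<dots> \<le> d * ?K" using n K0 by (intro mult_right_mono) auto
    finally have r2: "cmod (A f ?y - A (xi ?y) ?y * f ?y) \<le> d * ?K" .
    have "cmod (A f ?e - (A (xi ?x) ?e * f ?x + A (xi ?y) ?y * f ?e)) =
       cmod ((A f ?e - B f ?e) - (A (xi ?x) ?e - B (xi ?x) ?e) * f ?x - (A (xi ?y) ?y - B (xi ?y) ?y) * f ?e)"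
      using Bf by (simp add: algebra_simps)
    also have "\<dots> \<le> cmod ((A f ?e - B f ?e) - (A (xi ?x) ?e - B (xi ?x) ?e) * f ?x) + cmod ((A (xi ?y) ?y - B (xi ?y) ?y) * f ?e)"
      by (rule norm_triangle_ineq4)
    also have "\<dots> \<le> (cmod (A f ?e - B f ?e) + cmod ((A (xi ?x) ?e - B (xi ?x) ?e) * f ?x)) + cmod ((A (xi ?y) ?y - B (xi ?y) ?y) * f ?e)"
      by (intro add_right_mono norm_triangle_ineq4)
    also have "\<dots> \<le> n * hnorm f + n * cmod (f ?x) + n * cmod (f ?e)"
      using d1[of ?e] m1[of ?e ?x] m2[of ?y ?e] by linarith
    also have "\<dots> \<le> n * ?K" using n K0 by (simp add: algebra_simps mult_left_mono)
    also have "\<dots> \<le> d * ?K" using n K0 by (intro mult_right_mono) auto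
    finally have r3: "cmod (A f ?e - (A (xi ?x) ?e * f ?x + A (xi ?y) ?y * f ?e)) \<le> d * ?K" .
    show "cmod (A f ?x - A (xi ?x) ?x * f ?x) \<le> d * ?K \<and>
       cmod (A f ?y - A (xi ?y) ?y * f ?y) \<le> d * ?K \<and>
       cmod (A f ?e - (A (xi ?x) ?e * f ?x + A (xi ?y) ?y * f ?e)) \<le> d * ?K" using r1 r2 r3 by blast
  qed
  have "A f ?x - A (xi ?x) ?x * f ?x = 0" by (rule small_zero[of _ ?K]) (use key in blast)
  thus "A f ?x = A (xi ?x) ?x * f ?x" by simp
  have "A f ?y - A (xi ?y) ?y * f ?y = 0" by (rule small_zero[of _ ?K]) (use key in blast)
  thus "A f ?y = A (xi ?y) ?y * f ?y" by simp
  have "A f ?e - (A (xi ?x) ?e * f ?x + A (xi ?y) ?y * f ?e) = 0" by (rule small_zero[of _ ?K]) (use key in blast)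
  thus "A f ?e = A (xi ?x) ?e * f ?x + A (xi ?y) ?y * f ?e" by simp
qed

end

context
  fixes G :: "('v,'e) digraph" and x y :: 'v and e :: 'e
  assumes xv: "x \<in> verts G" and yv: "y \<in> verts G" and xy: "x \<noteq> y"
    and eE: "e \<in> edges_from_to G x y"
begin

lemma pie_add: "pie G x y e (op_add A B) = pie G x y e A + pie G x y e B"
  by (simp add: mat22_eq op_add_def)

lemma pie_scale: "pie G x y e (op_scale c A) = mat c ** pie G x y e A"
  by (simp add: mat22_eq op_scale_def mm_entries mat_entries)

lemma pie_mult: assumes A: "A \<in> Tplus G" and B: "B \<in> Tplus G"
  shows "pie G x y e (op_mult A B) = pie G x y e A ** pie G x y e B"
proof -
  have ph: "phi G x y e A" by (rule phi_T[OF xv yv xy eE A])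
  have b1: "B (xi (x,[])) \<in> ell2 G" by (rule bop_ell2[OF T_bop[OF B] xix[OF xv yv xy eE]])
  have b2: "B (xi (y,[])) \<in> ell2 G" by (rule bop_ell2[OF T_bop[OF B] xiy[OF xv yv xy eE]])
  have h1: "A (B (xi (x,[]))) (x,[]) = A (xi (x,[])) (x,[]) * B (xi (x,[])) (x,[])"
    "A (B (xi (x,[]))) (y,[e]) = A (xi (x,[])) (y,[e]) * B (xi (x,[])) (x,[]) + A (xi (y,[])) (y,[]) * B (xi (x,[])) (y,[e])"
    using ph b1 unfolding phi_def by auto
  have h2: "A (B (xi (y,[]))) (y,[]) = A (xi (y,[])) (y,[]) * B (xi (y,[])) (y,[])"
    using ph b2 unfolding phi_def by auto
  show ?thesis by (simp add: mat22_eq mm_entries op_mult_def h1 h2)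
qed

lemma pie_bound: assumes A: "A \<in> Tplus G" shows "norm (pie G x y e A) \<le> 4 * opnorm G A"
proof -
  have bA: "is_bop G A" by (rule T_bop[OF A])
  have "cmod (A (xi (x,[])) (x,[])) \<le> opnorm G A" "cmod (A (xi (x,[])) (y,[e])) \<le> opnorm G A"
    "cmod (A (xi (y,[])) (y,[])) \<le> opnorm G A"
    using opnorm_xi[OF bA path_x0[OF xv yv xy eE]] opnorm_xi[OF bA path_y0[OF xv yv xy eE]] by auto
  moreover have "0 \<le> opnorm G A" by (rule opnorm_nonneg[OF bA])
  ultimately show ?thesis using norm_mat2[of "pie G x y e A"] by simp
qed

lemma pie_image: "pie G x y e ` Tplus G = {M. M $ 1 $ 2 = 0}"
proof
  show "pie G x y e ` Tplus G \<subseteq> {M. M $ 1 $ 2 = 0}" by auto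
  show "{M. M $ 1 $ 2 = 0} \<subseteq> pie G x y e ` Tplus G"
  proof
    fix M :: "complex^2^2" assume "M \<in> {M. M $ 1 $ 2 = 0}"
    hence M12: "M $ 1 $ 2 = 0" by simp
    define A where "A = op_add (op_scale (M$1$1) (P G x)) (op_add (op_scale (M$2$1) (L G e)) (op_scale (M$2$2) (P G y)))"
    have AT: "A \<in> Tplus G" unfolding A_def
      using xv yv e_edge[OF xv yv xy eE] by (intro T_add T_scale P_T L_T)
    have ex: "xi (x,[]) \<in> ell2 G" and ey: "xi (y,[]) \<in> ell2 G" using xix[OF xv yv xy eE] xiy[OF xv yv xy eE] .
    have pe: "is_path G (y,[e])" and se: "src G e = x" using path_ep[OF xv yv xy eE] e_src[OF xv yv xy eE] .
    have vals: "P G x (xi (x,[])) (x,[]) = 1" "P G x (xi (x,[])) (y,[e]) = 0" "P G x (xi (y,[])) (y,[]) = 0"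
      "P G y (xi (x,[])) (x,[]) = 0" "P G y (xi (x,[])) (y,[e]) = 0" "P G y (xi (y,[])) (y,[]) = 1"
      "L G e (xi (x,[])) (x,[]) = 0" "L G e (xi (x,[])) (y,[e]) = 1" "L G e (xi (y,[])) (y,[]) = 0"
      unfolding P_apply[OF ex] P_apply[OF ey] L_apply[OF ex] L_apply[OF ey]
      using xy pe se by (simp_all add: xi_def)
    have "pie G x y e A = M"
      using M12 by (simp add: mat22_eq A_def op_add_def op_scale_def vals)
    thus "M \<in> pie G x y e ` Tplus G" using AT by blast
  qed
qed

lemma pie_rep: "pie G x y e \<in> rep_xy G x y"
proof -
  have ex: "xi (x,[]) \<in> ell2 G" and ey: "xi (y,[]) \<in> ell2 G" using xix[OF xv yv xy eE] xiy[OF xv yv xy eE] .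
  have nr: "nest_rep G (pie G x y e)"
    unfolding nest_rep_def using pie_add pie_mult pie_scale pie_bound pie_image by blast
  have c1: "(\<lambda>A. pie G x y e A $ 1 $ 1) \<in> Mchar G x"
    unfolding Mchar_def character_def
  proof (intro CollectI conjI ballI allI)
    fix A B assume A: "A \<in> Tplus G" and B: "B \<in> Tplus G"
    show "pie G x y e (op_add A B) $ 1 $ 1 = pie G x y e A $ 1 $ 1 + pie G x y e B $ 1 $ 1"
      by (simp add: pie_add)
    show "pie G x y e (op_mult A B) $ 1 $ 1 = pie G x y e A $ 1 $ 1 * pie G x y e B $ 1 $ 1"
      by (simp add: pie_mult[OF A B] mm_entries)
  next
    fix A c assume A: "A \<in> Tplus G"
    show "pie G x y e (op_scale c A) $ 1 $ 1 = c * pie G x y e A $ 1 $ 1"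
      by (simp add: pie_scale mm_entries mat_entries)
  next
    show "pie G x y e (P G x) $ 1 $ 1 = 1" unfolding pie_11 P_apply[OF ex] by (simp add: xi_def)
    hence "pie G x y e (P G x) $ 1 $ 1 \<noteq> 0" by simp
    thus "\<exists>A\<in>Tplus G. pie G x y e A $ 1 $ 1 \<noteq> 0" by (rule bexI[OF _ P_T[OF xv]])
  qed
  have c2: "(\<lambda>A. pie G x y e A $ 2 $ 2) \<in> Mchar G y"
    unfolding Mchar_def character_def
  proof (intro CollectI conjI ballI allI)
    fix A B assume A: "A \<in> Tplus G" and B: "B \<in> Tplus G"
    show "pie G x y e (op_add A B) $ 2 $ 2 = pie G x y e A $ 2 $ 2 + pie G x y e B $ 2 $ 2"
      by (simp add: pie_add)
    show "pie G x y e (op_mult A B) $ 2 $ 2 = pie G x y e A $ 2 $ 2 * pie G x y e B $ 2 $ 2"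
      by (simp add: pie_mult[OF A B] mm_entries)
  next
    fix A c assume A: "A \<in> Tplus G"
    show "pie G x y e (op_scale c A) $ 2 $ 2 = c * pie G x y e A $ 2 $ 2"
      by (simp add: pie_scale mm_entries mat_entries)
  next
    show "pie G x y e (P G y) $ 2 $ 2 = 1" unfolding pie_22 P_apply[OF ey] by (simp add: xi_def)
    hence "pie G x y e (P G y) $ 2 $ 2 \<noteq> 0" by simp
    thus "\<exists>A\<in>Tplus G. pie G x y e A $ 2 $ 2 \<noteq> 0" by (rule bexI[OF _ P_T[OF yv]])
  qed
  show ?thesis unfolding rep_xy_def using nr c1 c2 by blast
qed

lemma pie_L: "e' \<in> edges G \<Longrightarrow> pie G x y e (L G e') $ 2 $ 1 = (if e' = e then 1 else 0)"
proof -
  have ex: "xi (x,[]) \<in> ell2 G" using xix[OF xv yv xy eE] .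
  show ?thesis using path_ep[OF xv yv xy eE] e_src[OF xv yv xy eE]
    unfolding pie_21 L_apply[OF ex] by (simp add: xi_def)
qed

end

lemma entry_le: "cmod (M $ i $ j) \<le> norm (M :: complex^2^2)"
proof -
  have "cmod (M $ i $ j) \<le> norm (M $ i)" by (rule Finite_Cartesian_Product.norm_nth_le)
  also have "\<dots> \<le> norm M" by (rule Finite_Cartesian_Product.norm_nth_le)
  finally show ?thesis .
qed

lemma matneg: "mat (-1) ** (M::complex^2^2) = - M"
  by (simp add: mat22_eq mm_entries mat_entries)

lemma rep_hom:
  assumes "\<pi> \<in> rep_xy G x y" "A \<in> Tplus G" "B \<in> Tplus G"
  shows "\<pi> (op_add A B) = \<pi> A + \<pi> B" "\<pi> (op_mult A B) = \<pi> A ** \<pi> B"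
    "\<pi> (op_scale c A) = mat c ** \<pi> A"
  using assms unfolding rep_xy_def nest_rep_def by auto

lemma rep_lower: assumes "\<pi> \<in> rep_xy G x y" "A \<in> Tplus G" shows "\<pi> A $ 1 $ 2 = 0"
proof -
  have "\<pi> ` Tplus G = {M. M $ 1 $ 2 = 0}" using assms(1) unfolding rep_xy_def nest_rep_def by blast
  thus ?thesis using assms(2) by blast
qed

lemma rep_bound: assumes "\<pi> \<in> rep_xy G x y" shows "\<exists>M>0. \<forall>A\<in>Tplus G. norm (\<pi> A) \<le> M * opnorm G A"
proof -
  obtain C where C: "\<forall>A\<in>Tplus G. norm (\<pi> A) \<le> C * opnorm G A"
    using assms unfolding rep_xy_def nest_rep_def by blast
  have "\<forall>A\<in>Tplus G. norm (\<pi> A) \<le> max C 1 * opnorm G A"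
  proof
    fix A assume A: "A \<in> Tplus G"
    have "norm (\<pi> A) \<le> C * opnorm G A" using C A by blast
    also have "\<dots> \<le> max C 1 * opnorm G A" using opnorm_nonneg[OF T_bop[OF A]] by (intro mult_right_mono) auto
    finally show "norm (\<pi> A) \<le> max C 1 * opnorm G A" .
  qed
  thus ?thesis by (intro exI[of _ "max C 1"]) auto
qed

lemma rep_P: assumes "\<pi> \<in> rep_xy G x y" shows "\<pi> (P G x) $ 1 $ 1 = 1" "\<pi> (P G y) $ 2 $ 2 = 1"
  using assms unfolding rep_xy_def Mchar_def by auto

lemma zero_T: "x \<in> verts G \<Longrightarrow> op_zero \<in> Tplus G"
proof -
  assume "x \<in> verts G"
  hence "op_scale 0 (P G x) \<in> Tplus G" by (intro T_scale P_T)
  moreover have "op_scale 0 (P G x) = op_zero" unfolding op_scale_def op_zero_def by simp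
  ultimately show ?thesis by simp
qed

lemma PP_zero: "v \<noteq> u \<Longrightarrow> op_mult (P G v) (P G u) = op_zero"
proof (intro ext)
  fix f w assume vu: "v \<noteq> u"
  show "op_mult (P G v) (P G u) f w = op_zero f w"
  proof (cases "f \<in> ell2 G")
    case True
    have "P G u f \<in> ell2 G" using P_ell2_norm[OF True] by simp
    thus ?thesis unfolding op_mult_def op_zero_def using vu by (simp add: P_apply True)
  next
    case False
    thus ?thesis unfolding op_mult_def op_zero_def by (simp add: P_out P_apply)
  qed
qed

context
  fixes G :: "('v,'e) digraph" and x y :: 'v
  assumes xv: "x \<in> verts G" and yv: "y \<in> verts G" and xy: "x \<noteq> y"
begin

lemma zT: "op_zero \<in> Tplus G" using zero_T[OF xv] .

lemma rep_zero: assumes "\<pi> \<in> rep_xy G x y" shows "\<pi> op_zero = 0"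
proof -
  have e1: "\<pi> (op_add op_zero op_zero) = \<pi> op_zero + \<pi> op_zero" by (rule rep_hom(1)[OF assms zT zT])
  have e2: "op_add op_zero op_zero = op_zero" unfolding op_add_def op_zero_def by simp
  from e1 have "\<pi> op_zero + \<pi> op_zero = \<pi> op_zero + 0" by (simp only: e2 add_0_right)
  thus ?thesis by (rule add_left_imp_eq)
qed

lemma rep_diff: assumes "\<pi> \<in> rep_xy G x y" "A \<in> Tplus G" "B \<in> Tplus G"
  shows "\<pi> (op_diff A B) = \<pi> A - \<pi> B"
  unfolding op_diff_def using assms
  by (simp add: rep_hom[OF assms(1)] T_scale matneg)

lemma rep_PP: assumes p: "\<pi> \<in> rep_xy G x y"
  shows "\<pi> (P G x) $ 1 $ 1 = 1" "\<pi> (P G x) $ 1 $ 2 = 0" "\<pi> (P G x) $ 2 $ 2 = 0"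
    "\<pi> (P G y) $ 1 $ 1 = 0" "\<pi> (P G y) $ 1 $ 2 = 0" "\<pi> (P G y) $ 2 $ 2 = 1"
    "\<pi> (P G y) $ 2 $ 1 = - \<pi> (P G x) $ 2 $ 1"
proof -
  have Px: "P G x \<in> Tplus G" and Py: "P G y \<in> Tplus G" using P_T[OF xv] P_T[OF yv] by auto
  have a: "\<pi> (P G x) ** \<pi> (P G y) = 0"
    using rep_hom(2)[OF p Px Py] PP_zero[OF xy, of G] rep_zero[OF p] by simp
  have b: "\<pi> (P G y) ** \<pi> (P G x) = 0"
    using rep_hom(2)[OF p Py Px] PP_zero[OF xy[symmetric], of G] rep_zero[OF p] by simp
  have l1: "\<pi> (P G x) $ 1 $ 2 = 0" and l2: "\<pi> (P G y) $ 1 $ 2 = 0" using rep_lower[OF p] Px Py by auto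
  have d1: "\<pi> (P G x) $ 1 $ 1 = 1" and d2: "\<pi> (P G y) $ 2 $ 2 = 1" using rep_P[OF p] by auto
  have a11: "(\<pi> (P G x) ** \<pi> (P G y)) $ 1 $ 1 = 0" and a22: "(\<pi> (P G x) ** \<pi> (P G y)) $ 2 $ 2 = 0"
    using a by simp_all
  have b21: "(\<pi> (P G y) ** \<pi> (P G x)) $ 2 $ 1 = 0" using b by simp
  show "\<pi> (P G x) $ 1 $ 1 = 1" "\<pi> (P G x) $ 1 $ 2 = 0" "\<pi> (P G y) $ 1 $ 2 = 0" "\<pi> (P G y) $ 2 $ 2 = 1"
    using l1 l2 d1 d2 by auto
  show "\<pi> (P G y) $ 1 $ 1 = 0" using a11 l1 d1 by (simp add: mm_entries)
  show "\<pi> (P G x) $ 2 $ 2 = 0" using a22 l2 d2 by (simp add: mm_entries)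
  hence "\<pi> (P G y) $ 1 $ 1 = 0" using a11 l1 d1 by (simp add: mm_entries)
  thus "\<pi> (P G y) $ 2 $ 1 = - \<pi> (P G x) $ 2 $ 1" using b21 d1 d2 l1 l2 \<open>\<pi> (P G x) $ 2 $ 2 = 0\<close>
    by (simp add: mm_entries add_eq_0_iff)
qed

lemma K_T: "A \<in> Kxy G x y \<Longrightarrow> A \<in> Tplus G" unfolding Kxy_def by simp
lemma K_pi: "A \<in> Kxy G x y \<Longrightarrow> \<pi> \<in> rep_xy G x y \<Longrightarrow> \<pi> A = 0" unfolding Kxy_def by simp
lemma zero_K: "op_zero \<in> Kxy G x y" unfolding Kxy_def using zT rep_zero by simp

lemma coset_T: "A \<in> Tplus G \<Longrightarrow> X \<in> coset (Kxy G x y) A \<Longrightarrow> X \<in> Tplus G"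
  unfolding coset_def using T_add K_T by blast

lemma coset_pi: "A \<in> Tplus G \<Longrightarrow> X \<in> coset (Kxy G x y) A \<Longrightarrow> \<pi> \<in> rep_xy G x y \<Longrightarrow> \<pi> X = \<pi> A"
  unfolding coset_def using rep_hom(1) K_T K_pi by fastforce

lemma self_coset: "A \<in> coset (Kxy G x y) A"
proof -
  have "op_add A op_zero = A" unfolding op_add_def op_zero_def by simp
  thus ?thesis unfolding coset_def using zero_K by force
qed

lemma crep_in: "crep (coset (Kxy G x y) A) \<in> coset (Kxy G x y) A"
  unfolding crep_def by (rule someI[where P="\<lambda>a. a \<in> coset (Kxy G x y) A", OF self_coset])

lemma crep_T: "A \<in> Tplus G \<Longrightarrow> crep (coset (Kxy G x y) A) \<in> Tplus G"
  using coset_T crep_in by blast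

lemma crep_pi: "A \<in> Tplus G \<Longrightarrow> \<pi> \<in> rep_xy G x y \<Longrightarrow> \<pi> (crep (coset (Kxy G x y) A)) = \<pi> A"
  using coset_pi crep_in by blast

lemma coset_sub:
  assumes A: "A \<in> Tplus G" and B: "B \<in> Tplus G" and eq: "\<forall>\<pi>\<in>rep_xy G x y. \<pi> A = \<pi> B"
  shows "coset (Kxy G x y) A \<subseteq> coset (Kxy G x y) B"
proof
  fix X assume "X \<in> coset (Kxy G x y) A"
  then obtain k where k: "k \<in> Kxy G x y" "X = op_add A k" unfolding coset_def by blast
  define k' where "k' = op_add (op_diff A B) k"
  have kT: "k \<in> Tplus G" using K_T k(1) .
  have k'T: "k' \<in> Tplus G" unfolding k'_def op_diff_def using A B kT by (intro T_add T_scale)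
  have "\<forall>\<pi>\<in>rep_xy G x y. \<pi> k' = 0"
  proof
    fix \<pi> assume p: "\<pi> \<in> rep_xy G x y"
    have dT: "op_diff A B \<in> Tplus G" unfolding op_diff_def using A B by (intro T_add T_scale)
    have "\<pi> k' = \<pi> (op_diff A B) + \<pi> k" unfolding k'_def by (rule rep_hom(1)[OF p dT kT])
    also have "\<dots> = 0" using rep_diff[OF p A B] K_pi[OF k(1) p] eq p by simp
    finally show "\<pi> k' = 0" .
  qed
  hence k'K: "k' \<in> Kxy G x y" unfolding Kxy_def using k'T by simp
  have "op_add B k' = X" unfolding k(2) k'_def op_add_def op_diff_def op_scale_def by (intro ext) simp
  thus "X \<in> coset (Kxy G x y) B" unfolding coset_def using k'K by blast
qed

lemma coset_eqI:
  assumes "A \<in> Tplus G" "B \<in> Tplus G" "\<forall>\<pi>\<in>rep_xy G x y. \<pi> A = \<pi> B"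
  shows "coset (Kxy G x y) A = coset (Kxy G x y) B"
proof -
  have eq': "\<forall>\<pi>\<in>rep_xy G x y. \<pi> B = \<pi> A"
  proof
    fix \<pi> assume "\<pi> \<in> rep_xy G x y" thus "\<pi> B = \<pi> A" by (rule sym[OF bspec[OF assms(3)]])
  qed
  show ?thesis using coset_sub[OF assms] coset_sub[OF assms(2,1) eq'] by (rule equalityI)
qed

lemma coset_eqD:
  assumes "A \<in> Tplus G" "B \<in> Tplus G" "coset (Kxy G x y) A = coset (Kxy G x y) B" "\<pi> \<in> rep_xy G x y"
  shows "\<pi> A = \<pi> B"
  using coset_pi[OF assms(2) _ assms(4), of A] self_coset[of A] assms(3) by simp

lemma Q_simps:
  "carr (QA G x y) = coset (Kxy G x y) ` Tplus G"
  "plus (QA G x y) C D = coset (Kxy G x y) (op_add (crep C) (crep D))"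
  "times (QA G x y) C D = coset (Kxy G x y) (op_mult (crep C) (crep D))"
  "scal (QA G x y) c C = coset (Kxy G x y) (op_scale c (crep C))"
  "zer (QA G x y) = coset (Kxy G x y) op_zero"
  "nrm (QA G x y) C = Inf (opnorm G ` C)"
  unfolding QA_def quot_alg_def by simp_all

lemma carr_crep: "C \<in> carr (QA G x y) \<Longrightarrow> crep C \<in> Tplus G \<and> C = coset (Kxy G x y) (crep C)"
proof -
  assume "C \<in> carr (QA G x y)"
  then obtain A where A: "A \<in> Tplus G" "C = coset (Kxy G x y) A" unfolding Q_simps by blast
  have cT: "crep C \<in> Tplus G" using crep_T[OF A(1)] A(2) by simp
  have "coset (Kxy G x y) (crep C) = C"
    unfolding A(2) using crep_pi[OF A(1)] crep_T[OF A(1)] A(1) by (intro coset_eqI) auto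
  thus ?thesis using cT by simp
qed

lemma coset_carr: "A \<in> Tplus G \<Longrightarrow> coset (Kxy G x y) A \<in> carr (QA G x y)"
  unfolding Q_simps by blast

lemma Q_ops_carr:
  assumes "C \<in> carr (QA G x y)" "D \<in> carr (QA G x y)"
  shows "plus (QA G x y) C D \<in> carr (QA G x y)" "times (QA G x y) C D \<in> carr (QA G x y)"
    "scal (QA G x y) c C \<in> carr (QA G x y)" "zer (QA G x y) \<in> carr (QA G x y)"
  using carr_crep[OF assms(1)] carr_crep[OF assms(2)] zT
  unfolding Q_simps(2-5) by (auto intro!: coset_carr T_add T_mult T_scale)

definition val :: "(('v,'e) oper \<Rightarrow> complex^2^2) \<Rightarrow> ('v,'e) oper set \<Rightarrow> complex^2^2" where
  "val \<pi> C = \<pi> (crep C)"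

lemma val_coset: "A \<in> Tplus G \<Longrightarrow> \<pi> \<in> rep_xy G x y \<Longrightarrow> val \<pi> (coset (Kxy G x y) A) = \<pi> A"
  unfolding val_def by (rule crep_pi)

lemma val_ops:
  assumes C: "C \<in> carr (QA G x y)" and D: "D \<in> carr (QA G x y)" and p: "\<pi> \<in> rep_xy G x y"
  shows "val \<pi> (plus (QA G x y) C D) = val \<pi> C + val \<pi> D"
    "val \<pi> (times (QA G x y) C D) = val \<pi> C ** val \<pi> D"
    "val \<pi> (scal (QA G x y) c C) = mat c ** val \<pi> C"
    "val \<pi> (zer (QA G x y)) = 0"
proof -
  have c: "crep C \<in> Tplus G" and d: "crep D \<in> Tplus G" using carr_crep C D by auto
  show "val \<pi> (plus (QA G x y) C D) = val \<pi> C + val \<pi> D"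
    unfolding Q_simps using val_coset[OF T_add[OF c d] p] rep_hom[OF p c d] by (simp add: val_def)
  show "val \<pi> (times (QA G x y) C D) = val \<pi> C ** val \<pi> D"
    unfolding Q_simps using val_coset[OF T_mult[OF c d] p] rep_hom[OF p c d] by (simp add: val_def)
  show "val \<pi> (scal (QA G x y) c C) = mat c ** val \<pi> C"
    unfolding Q_simps using val_coset[OF T_scale[OF c] p] rep_hom[OF p c d] by (simp add: val_def)
  show "val \<pi> (zer (QA G x y)) = 0"
    unfolding Q_simps using val_coset[OF zT p] rep_zero[OF p] by simp
qed

lemma Q_eqI:
  assumes C: "C \<in> carr (QA G x y)" and D: "D \<in> carr (QA G x y)"
    and eq: "\<And>\<pi>. \<pi> \<in> rep_xy G x y \<Longrightarrow> val \<pi> C = val \<pi> D"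
  shows "C = D"
proof -
  have c: "crep C \<in> Tplus G" "C = coset (Kxy G x y) (crep C)" and d: "crep D \<in> Tplus G" "D = coset (Kxy G x y) (crep D)"
    using carr_crep C D by auto
  have e: "coset (Kxy G x y) (crep C) = coset (Kxy G x y) (crep D)"
    using c(1) d(1) eq unfolding val_def by (intro coset_eqI) auto
  have "C = coset (Kxy G x y) (crep C)" by (rule c(2))
  also have "\<dots> = coset (Kxy G x y) (crep D)" by (rule e)
  also have "\<dots> = D" by (rule d(2)[symmetric])
  finally show ?thesis .
qed

lemma val_lower: "C \<in> carr (QA G x y) \<Longrightarrow> \<pi> \<in> rep_xy G x y \<Longrightarrow> val \<pi> C $ 1 $ 2 = 0"
  unfolding val_def using carr_crep[of C] rep_lower[of \<pi> G x y "crep C"] by simp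

lemma nrm_le: assumes A: "A \<in> Tplus G" shows "nrm (QA G x y) (coset (Kxy G x y) A) \<le> opnorm G A"
  unfolding Q_simps
proof (rule cInf_lower)
  show "opnorm G A \<in> opnorm G ` coset (Kxy G x y) A" using self_coset by blast
  show "bdd_below (opnorm G ` coset (Kxy G x y) A)"
    by (rule bdd_belowI[of _ 0]) (use coset_T[OF A] opnorm_nonneg T_bop in blast)
qed

lemma val_bound_gen:
  assumes C: "C \<in> carr (QA G x y)" and p: "\<pi> \<in> rep_xy G x y" and M: "M > 0"
    and b: "\<forall>A\<in>Tplus G. norm (\<pi> A) \<le> M * opnorm G A"
  shows "norm (val \<pi> C) \<le> M * nrm (QA G x y) C"
proof -
  obtain A where A: "A \<in> Tplus G" "C = coset (Kxy G x y) A" using C unfolding Q_simps by blast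
  have "norm (val \<pi> C) / M \<le> Inf (opnorm G ` C)"
  proof (rule cInf_greatest)
    show "opnorm G ` C \<noteq> {}" using A(2) self_coset by blast
    fix r assume "r \<in> opnorm G ` C"
    then obtain X where X: "X \<in> C" "r = opnorm G X" by blast
    have XT: "X \<in> Tplus G" using coset_T A X by blast
    have "val \<pi> C = \<pi> X" using A X coset_pi[OF A(1) _ p] val_coset[OF A(1) p] by simp
    hence "norm (val \<pi> C) \<le> M * r" using b XT X by simp
    thus "norm (val \<pi> C) / M \<le> r" using M by (simp add: divide_le_eq mult.commute)
  qed
  thus ?thesis using M unfolding Q_simps by (simp add: divide_le_eq mult.commute)
qed

lemma val_bound:
  assumes p: "\<pi> \<in> rep_xy G x y"
  shows "\<exists>M>0. \<forall>C\<in>carr (QA G x y). norm (val \<pi> C) \<le> M * nrm (QA G x y) C"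
  using rep_bound[OF p] val_bound_gen[OF _ p] by blast

end

lemma small_zero2: assumes "\<And>d. d > 0 \<Longrightarrow> cmod z \<le> d * K" shows "z = 0"
proof (rule ccontr)
  assume "z \<noteq> 0"
  hence zp: "cmod z > 0" by simp
  define d where "d = cmod z / (2 * (\<bar>K\<bar> + 1))"
  have dp: "d > 0" unfolding d_def using zp by (simp add: add_nonneg_pos)
  have "cmod z \<le> d * K" using assms[OF dp] .
  also have "\<dots> \<le> d * (\<bar>K\<bar> + 1)" using dp by (intro mult_left_mono) auto
  also have "\<dots> = cmod z / 2" unfolding d_def by (simp add: field_simps add_nonneg_pos)
  finally show False using zp by simp
qed

lemma LA:
  fixes v :: "'e \<Rightarrow> 's \<Rightarrow> 'a::field"
  assumes "finite S"
  shows "finite E \<Longrightarrow> card S < card E \<Longrightarrow> \<exists>c. (\<exists>e\<in>E. c e \<noteq> 0) \<and> (\<forall>s\<in>S. (\<Sum>e\<in>E. c e * v e s) = 0)"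
  using assms
proof (induction S arbitrary: E v rule: finite_induct)
  case empty
  then obtain e0 where "e0 \<in> E" by fastforce
  thus ?case by (intro exI[of _ "\<lambda>e. if e = e0 then 1 else 0"]) auto
next
  case (insert s S)
  show ?case
  proof (cases "\<forall>e\<in>E. v e s = 0")
    case True
    have "card S < card E" using insert by simp
    then obtain c where c: "\<exists>e\<in>E. c e \<noteq> 0" "\<forall>t\<in>S. (\<Sum>e\<in>E. c e * v e t) = 0"
      using insert.IH[OF insert.prems(1)] by blast
    show ?thesis using c True by (intro exI[of _ c]) auto
  next
    case False
    then obtain e0 where e0: "e0 \<in> E" "v e0 s \<noteq> 0" by blast
    define E' where "E' = E - {e0}"
    have fE': "finite E'" unfolding E'_def using insert.prems by simp
    have cE': "card S < card E'" unfolding E'_def using insert.prems insert.hyps e0 by (simp add: card_Diff_singleton)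
    define q where "q t = v e0 t / v e0 s" for t
    define w where "w e t = v e t - v e s * q t" for e t
    obtain c' where c': "\<exists>e\<in>E'. c' e \<noteq> 0" "\<forall>t\<in>S. (\<Sum>e\<in>E'. c' e * w e t) = 0"
      using insert.IH[OF fE' cE', of w] by blast
    have ws: "w e s = 0" for e unfolding w_def q_def using e0 by simp
    have c'all: "\<forall>t\<in>insert s S. (\<Sum>e\<in>E'. c' e * w e t) = 0" using c' ws by simp
    define \<sigma> where "\<sigma> = (\<Sum>e\<in>E'. c' e * v e s)"
    define c where "c e = (if e = e0 then - \<sigma> / v e0 s else c' e)" for e
    have split: "(\<Sum>e\<in>E'. c' e * v e t) = (\<Sum>e\<in>E'. c' e * w e t) + \<sigma> * q t" for t
    proof -
      have "(\<Sum>e\<in>E'. c' e * v e t) = (\<Sum>e\<in>E'. c' e * w e t + c' e * v e s * q t)"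
        unfolding w_def by (intro sum.cong) (auto simp: algebra_simps)
      also have "\<dots> = (\<Sum>e\<in>E'. c' e * w e t) + \<sigma> * q t"
        unfolding \<sigma>_def by (simp add: sum.distrib sum_distrib_right)
      finally show ?thesis .
    qed
    have "\<forall>t\<in>insert s S. (\<Sum>e\<in>E. c e * v e t) = 0"
    proof
      fix t assume t: "t \<in> insert s S"
      have "(\<Sum>e\<in>E. c e * v e t) = c e0 * v e0 t + (\<Sum>e\<in>E'. c e * v e t)"
        unfolding E'_def using insert.prems(1) e0(1) by (simp add: sum.remove)
      also have "(\<Sum>e\<in>E'. c e * v e t) = (\<Sum>e\<in>E'. c' e * v e t)"
        unfolding c_def E'_def by (intro sum.cong) auto
      also have "\<dots> = \<sigma> * q t"
      proof -
        have "(\<Sum>e\<in>E'. c' e * w e t) = 0" by (rule bspec[OF c'all t])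
        thus ?thesis using split[of t] by simp
      qed
      also have "c e0 * v e0 t = - \<sigma> * q t" unfolding c_def q_def by simp
      finally show "(\<Sum>e\<in>E. c e * v e t) = 0" by simp
    qed
    moreover have "\<exists>e\<in>E. c e \<noteq> 0"
    proof -
      obtain e where e: "e \<in> E'" "c' e \<noteq> 0" using c' by blast
      hence "e \<in> E" "e \<noteq> e0" unfolding E'_def by auto
      thus ?thesis using e(2) unfolding c_def by (intro bexI[of _ e]) auto
    qed
    ultimately show ?thesis by blast
  qed
qed

lemma path_fst: "is_path G w \<Longrightarrow> snd w \<noteq> [] \<Longrightarrow> fst w = rng G (hd (snd w))"
  unfolding is_path_def by (cases w) auto

lemma PLP: "op_mult (P G y) (op_mult (L G e) (P G x)) = (if src G e = x \<and> rng G e = y then L G e else op_zero)"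
proof (intro ext)
  fix f w
  show "op_mult (P G y) (op_mult (L G e) (P G x)) f w = (if src G e = x \<and> rng G e = y then L G e else op_zero) f w"
  proof (cases "f \<in> ell2 G")
    case True
    have g: "P G x f \<in> ell2 G" using P_ell2_norm[OF True] by simp
    have h: "L G e (P G x f) \<in> ell2 G" using L_ell2_norm[OF g] by simp
    have e1: "op_mult (P G y) (op_mult (L G e) (P G x)) f w = (if fst w = y then L G e (P G x f) w else 0)"
      unfolding op_mult_def o_def P_apply[OF h] by simp
    have e2: "L G e (P G x f) w = (if is_path G w \<and> snd w \<noteq> [] \<and> hd (snd w) = e then P G x f (src G e, tl (snd w)) else 0)"
      unfolding L_apply[OF g] by simp
    have e3: "P G x f (src G e, tl (snd w)) = (if src G e = x then f (src G e, tl (snd w)) else 0)"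
      unfolding P_apply[OF True] by simp
    have e4: "L G e f w = (if is_path G w \<and> snd w \<noteq> [] \<and> hd (snd w) = e then f (src G e, tl (snd w)) else 0)"
      unfolding L_apply[OF True] by simp
    show ?thesis unfolding e1 e2 e3 op_zero_def
      using path_fst[of G w] by (auto simp add: e4)
  next
    case False
    have "P G x f = (\<lambda>_. 0)" using P_out[OF False] .
    thus ?thesis unfolding op_mult_def op_zero_def o_def using L_out[OF False]
      by (simp add: L_apply P_apply)
  qed
qed

lemma PvP: "x \<noteq> y \<Longrightarrow> op_mult (P G y) (op_mult (P G v) (P G x)) = op_zero"
proof (intro ext)
  fix f w assume xy: "x \<noteq> y"
  show "op_mult (P G y) (op_mult (P G v) (P G x)) f w = op_zero f w"
  proof (cases "f \<in> ell2 G")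
    case True
    have g: "P G x f \<in> ell2 G" using P_ell2_norm[OF True] by simp
    have h: "P G v (P G x f) \<in> ell2 G" using P_ell2_norm[OF g] by simp
    have e1: "op_mult (P G y) (op_mult (P G v) (P G x)) f w = (if fst w = y then P G v (P G x f) w else 0)"
      unfolding op_mult_def o_def P_apply[OF h] by simp
    have e2: "P G v (P G x f) w = (if fst w = v then P G x f w else 0)"
      unfolding P_apply[OF g] by simp
    have e3: "P G x f w = (if fst w = x then f w else 0)"
      unfolding P_apply[OF True] by simp
    show ?thesis unfolding e1 e2 e3 op_zero_def using xy by auto
  next
    case False
    have "P G x f = (\<lambda>_. 0)" using P_out[OF False] .
    thus ?thesis unfolding op_mult_def op_zero_def o_def by (simp add: P_apply)
  qed
qed

lemma sand_norm:
  assumes A: "is_bop G A" and B: "is_bop G B"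
  shows "opnorm G (op_diff (op_mult (P G y) (op_mult A (P G x))) (op_mult (P G y) (op_mult B (P G x)))) \<le> opnorm G (op_diff A B)"
proof (rule opnorm_leI)
  fix f assume f: "f \<in> ell2 G" "hnorm f \<le> 1"
  define g where "g = P G x f"
  have g1: "g \<in> ell2 G" and g0: "hnorm g \<le> hnorm f" using P_ell2_norm[OF f(1), of x] unfolding g_def by auto
  have g: "g \<in> ell2 G" "hnorm g \<le> 1" using g1 g0 f(2) by auto
  have bD: "is_bop G (op_diff A B)" using A B by (rule bop_op_diff)
  have Ag: "A g \<in> ell2 G" and Bg: "B g \<in> ell2 G" and Dg: "op_diff A B g \<in> ell2 G"
    using bop_ell2[OF A g(1)] bop_ell2[OF B g(1)] bop_ell2[OF bD g(1)] by auto
  have eq: "op_diff (op_mult (P G y) (op_mult A (P G x))) (op_mult (P G y) (op_mult B (P G x))) f = P G y (op_diff A B g)"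
    unfolding g_def[symmetric] op_diff_def op_add_def op_scale_def op_mult_def o_def
    using Ag Bg Dg g_def by (auto simp: P_apply op_diff_def op_add_def op_scale_def)
  have "hnorm (P G y (op_diff A B g)) \<le> hnorm (op_diff A B g)" using P_ell2_norm[OF Dg] by simp
  also have "\<dots> \<le> opnorm G (op_diff A B) * hnorm g" by (rule opnorm_bound[OF bD g(1)])
  also have "\<dots> \<le> opnorm G (op_diff A B) * 1" using g(2) opnorm_nonneg[OF bD] by (intro mult_left_mono) auto
  finally show "hnorm (op_diff (op_mult (P G y) (op_mult A (P G x))) (op_mult (P G y) (op_mult B (P G x))) f) \<le> opnorm G (op_diff A B)"
    unfolding eq by simp
qed

locale QC =
  fixes G :: "('v,'e) digraph" and x y :: 'v
  assumes xv: "x \<in> verts G" and yv: "y \<in> verts G" and xy: "x \<noteq> y"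
begin

abbreviation "QQ \<equiv> QA G x y"
abbreviation "KK \<equiv> Kxy G x y"
abbreviation "RR \<equiv> rep_xy G x y"

lemmas zT' = zT[OF xv yv xy]
lemmas rep_zero' = rep_zero[OF xv yv xy]
lemmas rep_PP' = rep_PP[OF xv yv xy]
lemmas coset_eqD' = coset_eqD[OF xv yv xy]
lemmas carr_crep' = carr_crep[OF xv yv xy]
lemmas coset_carr' = coset_carr[OF xv yv xy]
lemmas Q_ops_carr' = Q_ops_carr[OF xv yv xy]
lemmas val_coset' = val_coset[OF xv yv xy]
lemmas val_ops' = val_ops[OF xv yv xy]
lemmas Q_eqI' = Q_eqI[OF xv yv xy]
lemmas val_lower' = val_lower[OF xv yv xy]
lemmas nrm_le' = nrm_le[OF xv yv xy]
lemmas val_bound_gen' = val_bound_gen[OF xv yv xy]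
lemmas val_bound' = val_bound[OF xv yv xy]
lemmas Q_simps' = Q_simps[OF xv yv xy]

definition Dg :: "('v,'e) oper set set" where
  "Dg = {C \<in> carr QQ. \<forall>\<pi>\<in>RR. val \<pi> C $ 1 $ 1 = 0 \<and> val \<pi> C $ 2 $ 2 = 0}"

lemma Dg_sub_jrad: "Dg \<subseteq> jrad QQ"
proof
  fix C assume "C \<in> Dg"
  hence C: "C \<in> carr QQ" and CD: "\<And>\<pi>. \<pi> \<in> RR \<Longrightarrow> val \<pi> C $ 1 $ 1 = 0 \<and> val \<pi> C $ 2 $ 2 = 0"
    unfolding Dg_def by auto
  have "\<forall>t. \<forall>b\<in>carr QQ. lqr QQ (plus QQ (scal QQ t C) (times QQ b C))"
  proof (intro allI ballI)
    fix t b assume b: "b \<in> carr QQ"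
    define z where "z = plus QQ (scal QQ t C) (times QQ b C)"
    have sc: "scal QQ t C \<in> carr QQ" and tc: "times QQ b C \<in> carr QQ" using Q_ops_carr'[OF C C] Q_ops_carr'[OF b C] by auto
    have zc: "z \<in> carr QQ" unfolding z_def using Q_ops_carr'[OF sc tc] by auto
    define c where "c = scal QQ (-1) z"
    have cc: "c \<in> carr QQ" unfolding c_def using Q_ops_carr'[OF zc zc] by auto
    have cz: "times QQ c z \<in> carr QQ" using Q_ops_carr'[OF cc zc] by auto
    have scz: "scal QQ (-1) (times QQ c z) \<in> carr QQ" using Q_ops_carr'[OF cz cz] by auto
    have zs: "plus QQ z (scal QQ (-1) (times QQ c z)) \<in> carr QQ" using Q_ops_carr'[OF zc scz] by auto
    have lhs: "plus QQ c (plus QQ z (scal QQ (-1) (times QQ c z))) \<in> carr QQ" using Q_ops_carr'[OF cc zs] by auto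
    have "plus QQ c (plus QQ z (scal QQ (-1) (times QQ c z))) = zer QQ"
    proof (rule Q_eqI'[OF lhs Q_ops_carr'(4)[OF C C]])
      fix \<pi> assume p: "\<pi> \<in> RR"
      have vz: "val \<pi> z = mat t ** val \<pi> C + val \<pi> b ** val \<pi> C"
        unfolding z_def using val_ops'(1)[OF sc tc p] val_ops'(3)[OF C C p] val_ops'(2)[OF b C p] by simp
      have z11: "val \<pi> z $ 1 $ 1 = 0" and z22: "val \<pi> z $ 2 $ 2 = 0"
        using CD[OF p] val_lower'[OF b p] val_lower'[OF C p] unfolding vz by (simp_all add: mm_entries mat_entries)
      have z12: "val \<pi> z $ 1 $ 2 = 0" using val_lower'[OF zc p] .
      have "val \<pi> (plus QQ c (plus QQ z (scal QQ (-1) (times QQ c z)))) =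
         mat (-1) ** val \<pi> z + (val \<pi> z + mat (-1) ** ((mat (-1) ** val \<pi> z) ** val \<pi> z))"
        unfolding c_def using val_ops'(1)[OF cc zs p] val_ops'(1)[OF zc scz p] val_ops'(3)[OF cz cz p]
          val_ops'(2)[OF cc zc p] val_ops'(3)[OF zc zc p] by (simp add: c_def)
      also have "\<dots> = 0" using z11 z22 z12 by (simp add: mat22_eq mm_entries mat_entries)
      finally show "val \<pi> (plus QQ c (plus QQ z (scal QQ (-1) (times QQ c z)))) = val \<pi> (zer QQ)"
        using val_ops'(4)[OF C C p] by simp
    qed
    thus "lqr QQ (plus QQ (scal QQ t C) (times QQ b C))" unfolding lqr_def z_def[symmetric] using cc by blast
  qed
  thus "C \<in> jrad QQ" unfolding jrad_def using C by blast
qed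

lemma jrad_sub_Dg: "jrad QQ \<subseteq> Dg"
proof
  fix C assume "C \<in> jrad QQ"
  hence C: "C \<in> carr QQ" and J: "\<And>t b. b \<in> carr QQ \<Longrightarrow> lqr QQ (plus QQ (scal QQ t C) (times QQ b C))"
    unfolding jrad_def by auto
  have zc: "zer QQ \<in> carr QQ" using Q_ops_carr'(4)[OF C C] .
  have main: "\<exists>c\<in>carr QQ. val \<pi> (plus QQ c (plus QQ z (scal QQ (-1) (times QQ c z)))) = 0 \<and> z \<in> carr QQ \<and>
        val \<pi> z = mat t ** val \<pi> C"
    if p: "\<pi> \<in> RR" and zdef: "z = plus QQ (scal QQ t C) (times QQ (zer QQ) C)" for \<pi> t z
  proof -
    have sc: "scal QQ t C \<in> carr QQ" and tc: "times QQ (zer QQ) C \<in> carr QQ" using Q_ops_carr'[OF C C] Q_ops_carr'[OF zc C] by auto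
    have zc': "z \<in> carr QQ" unfolding zdef using Q_ops_carr'[OF sc tc] by auto
    obtain c where c: "c \<in> carr QQ" "plus QQ c (plus QQ z (scal QQ (-1) (times QQ c z))) = zer QQ"
      using J[OF zc, of t] unfolding lqr_def zdef by blast
    have "val \<pi> z = mat t ** val \<pi> C"
      unfolding zdef using val_ops'(1)[OF sc tc p] val_ops'(3)[OF C C p] val_ops'(2)[OF zc C p] val_ops'(4)[OF C C p] by simp
    moreover have "val \<pi> (plus QQ c (plus QQ z (scal QQ (-1) (times QQ c z)))) = 0"
      using c(2) val_ops'(4)[OF C C p] by simp
    ultimately show ?thesis using c(1) zc' by blast
  qed
  have "\<forall>\<pi>\<in>RR. val \<pi> C $ 1 $ 1 = 0 \<and> val \<pi> C $ 2 $ 2 = 0"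
  proof (intro ballI conjI)
    fix \<pi> assume p: "\<pi> \<in> RR"
    show "val \<pi> C $ 1 $ 1 = 0"
    proof (rule ccontr)
      assume ne: "val \<pi> C $ 1 $ 1 \<noteq> 0"
      define t where "t = 1 / val \<pi> C $ 1 $ 1"
      define z where "z = plus QQ (scal QQ t C) (times QQ (zer QQ) C)"
      obtain c where c: "c \<in> carr QQ" "val \<pi> (plus QQ c (plus QQ z (scal QQ (-1) (times QQ c z)))) = 0"
        "z \<in> carr QQ" "val \<pi> z = mat t ** val \<pi> C" using main[OF p z_def] by blast
      have cz: "times QQ c z \<in> carr QQ" using Q_ops_carr'[OF c(1) c(3)] by auto
      have scz: "scal QQ (-1) (times QQ c z) \<in> carr QQ" using Q_ops_carr'[OF cz cz] by auto
      have zs: "plus QQ z (scal QQ (-1) (times QQ c z)) \<in> carr QQ" using Q_ops_carr'[OF c(3) scz] by auto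
      have z11: "val \<pi> z $ 1 $ 1 = 1" using c(4) ne unfolding t_def by (simp add: mm_entries mat_entries)
      have "val \<pi> (plus QQ c (plus QQ z (scal QQ (-1) (times QQ c z)))) $ 1 $ 1 = 1"
        using val_ops'(1)[OF c(1) zs p] val_ops'(1)[OF c(3) scz p] val_ops'(3)[OF cz cz p]
          val_ops'(2)[OF c(1) c(3) p] z11 val_lower'[OF c(1) p]
        by (simp add: mm_entries mat_entries)
      thus False using c(2) by simp
    qed
    show "val \<pi> C $ 2 $ 2 = 0"
    proof (rule ccontr)
      assume ne: "val \<pi> C $ 2 $ 2 \<noteq> 0"
      define t where "t = 1 / val \<pi> C $ 2 $ 2"
      define z where "z = plus QQ (scal QQ t C) (times QQ (zer QQ) C)"
      obtain c where c: "c \<in> carr QQ" "val \<pi> (plus QQ c (plus QQ z (scal QQ (-1) (times QQ c z)))) = 0"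
        "z \<in> carr QQ" "val \<pi> z = mat t ** val \<pi> C" using main[OF p z_def] by blast
      have cz: "times QQ c z \<in> carr QQ" using Q_ops_carr'[OF c(1) c(3)] by auto
      have scz: "scal QQ (-1) (times QQ c z) \<in> carr QQ" using Q_ops_carr'[OF cz cz] by auto
      have zs: "plus QQ z (scal QQ (-1) (times QQ c z)) \<in> carr QQ" using Q_ops_carr'[OF c(3) scz] by auto
      have z22: "val \<pi> z $ 2 $ 2 = 1" using c(4) ne unfolding t_def by (simp add: mm_entries mat_entries)
      have "val \<pi> (plus QQ c (plus QQ z (scal QQ (-1) (times QQ c z)))) $ 2 $ 2 = 1"
        using val_ops'(1)[OF c(1) zs p] val_ops'(1)[OF c(3) scz p] val_ops'(3)[OF cz cz p]
          val_ops'(2)[OF c(1) c(3) p] z22 val_lower'[OF c(3) p]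
        by (simp add: mm_entries mat_entries)
      thus False using c(2) by simp
    qed
  qed
  thus "C \<in> Dg" unfolding Dg_def using C by blast
qed

lemma jrad_eq: "jrad QQ = Dg" using Dg_sub_jrad jrad_sub_Dg by (rule equalityI[rotated])

end

definition sandw :: "('v,'e) digraph \<Rightarrow> 'v \<Rightarrow> 'v \<Rightarrow> ('v,'e) oper \<Rightarrow> ('v,'e) oper" where
  "sandw G u v B = op_mult (P G u) (op_mult B (P G v))"

context QC
begin

lemma sandw_T: "B \<in> Tplus G \<Longrightarrow> u \<in> verts G \<Longrightarrow> v \<in> verts G \<Longrightarrow> sandw G u v B \<in> Tplus G"
  unfolding sandw_def by (intro T_mult P_T)

lemma pi_sandw: "\<pi> \<in> RR \<Longrightarrow> B \<in> Tplus G \<Longrightarrow> u \<in> verts G \<Longrightarrow> v \<in> verts G \<Longrightarrow>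
   \<pi> (sandw G u v B) = \<pi> (P G u) ** (\<pi> B ** \<pi> (P G v))"
  unfolding sandw_def using rep_hom P_T T_mult by metis

lemma Dg_iff: "C \<in> Dg \<longleftrightarrow> C \<in> carr QQ \<and> (\<forall>\<pi>\<in>RR. val \<pi> C $ 1 $ 1 = 0 \<and> val \<pi> C $ 2 $ 2 = 0)"
  unfolding Dg_def by simp

lemma Dg_ideal: "is_ideal QQ Dg"
  unfolding is_ideal_def
proof (intro conjI ballI allI)
  show "Dg \<subseteq> carr QQ" unfolding Dg_def by blast
  have zc: "zer QQ \<in> carr QQ" using Q_ops_carr'(4)[OF coset_carr'[OF zT'] coset_carr'[OF zT']] .
  show "zer QQ \<in> Dg" unfolding Dg_iff using zc val_ops'(4)[OF zc zc] by simp
next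
  fix a b assume a: "a \<in> Dg" and b: "b \<in> Dg"
  have ac: "a \<in> carr QQ" and bc: "b \<in> carr QQ" using a b unfolding Dg_iff by auto
  show "plus QQ a b \<in> Dg" unfolding Dg_iff using Q_ops_carr'(1)[OF ac bc] val_ops'(1)[OF ac bc] a b
    unfolding Dg_iff by simp
next
  fix a c assume a: "a \<in> Dg"
  have ac: "a \<in> carr QQ" using a unfolding Dg_iff by auto
  show "scal QQ c a \<in> Dg" unfolding Dg_iff using Q_ops_carr'(3)[OF ac ac] val_ops'(3)[OF ac ac] a
    unfolding Dg_iff by (simp add: mm_entries mat_entries)
next
  fix a b assume a: "a \<in> Dg" and bc: "b \<in> carr QQ"
  have ac: "a \<in> carr QQ" using a unfolding Dg_iff by auto
  show "times QQ b a \<in> Dg" unfolding Dg_iff using Q_ops_carr'(2)[OF bc ac] val_ops'(2)[OF bc ac] a val_lower'[OF bc] val_lower'[OF ac]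
    unfolding Dg_iff by (simp add: mm_entries)
  show "times QQ a b \<in> Dg" unfolding Dg_iff using Q_ops_carr'(2)[OF ac bc] val_ops'(2)[OF ac bc] a val_lower'[OF bc] val_lower'[OF ac]
    unfolding Dg_iff by (simp add: mm_entries)
qed

lemma diff_carr: "a \<in> carr QQ \<Longrightarrow> b \<in> carr QQ \<Longrightarrow> plus QQ a (scal QQ (-1) b) \<in> carr QQ"
  using Q_ops_carr' by metis

lemma val_diff: "a \<in> carr QQ \<Longrightarrow> b \<in> carr QQ \<Longrightarrow> \<pi> \<in> RR \<Longrightarrow>
    val \<pi> (plus QQ a (scal QQ (-1) b)) = val \<pi> a - val \<pi> b"
proof -
  assume a: "a \<in> carr QQ" and b: "b \<in> carr QQ" and p: "\<pi> \<in> RR"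
  have sb: "scal QQ (-1) b \<in> carr QQ" using Q_ops_carr'(3)[OF b b] .
  show ?thesis using val_ops'(1)[OF a sb p] val_ops'(3)[OF b b p] by (simp add: matneg)
qed

lemma Dg_closed: "is_closed_in QQ Dg"
  unfolding is_closed_in_def
proof (intro ballI impI)
  fix a assume ac: "a \<in> carr QQ" and ap: "\<forall>\<epsilon>>0. \<exists>b\<in>Dg. nrm QQ (plus QQ a (scal QQ (-1) b)) < \<epsilon>"
  have "\<forall>\<pi>\<in>RR. val \<pi> a $ 1 $ 1 = 0 \<and> val \<pi> a $ 2 $ 2 = 0"
  proof (intro ballI)
    fix \<pi> assume p: "\<pi> \<in> RR"
    obtain M where M: "M > 0" "\<forall>C\<in>carr QQ. norm (val \<pi> C) \<le> M * nrm QQ C" using val_bound'[OF p] by blast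
    have key: "cmod (val \<pi> a $ i $ i) \<le> d * M" if d: "d > 0" and ii: "i = 1 \<or> i = 2" for d i
    proof -
      obtain b where b: "b \<in> Dg" "nrm QQ (plus QQ a (scal QQ (-1) b)) < d" using ap d by blast
      have bc: "b \<in> carr QQ" using b(1) unfolding Dg_iff by auto
      have bz: "val \<pi> b $ i $ i = 0" using b(1) p ii unfolding Dg_iff by auto
      have dc: "plus QQ a (scal QQ (-1) b) \<in> carr QQ" by (rule diff_carr[OF ac bc])
      have "val \<pi> a $ i $ i = val \<pi> (plus QQ a (scal QQ (-1) b)) $ i $ i" using val_diff[OF ac bc p] bz by simp
      hence "cmod (val \<pi> a $ i $ i) \<le> norm (val \<pi> (plus QQ a (scal QQ (-1) b)))" using entry_le by metis
      also have "\<dots> \<le> M * nrm QQ (plus QQ a (scal QQ (-1) b))" using M dc by blast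
      also have "\<dots> \<le> M * d" using b(2) M by (intro mult_left_mono) auto
      finally show ?thesis by (simp add: mult.commute)
    qed
    show "val \<pi> a $ 1 $ 1 = 0 \<and> val \<pi> a $ 2 $ 2 = 0"
      using small_zero2[of "val \<pi> a $ 1 $ 1" M] small_zero2[of "val \<pi> a $ 2 $ 2" M] key by blast
  qed
  thus "a \<in> Dg" unfolding Dg_iff using ac by blast
qed

lemma L_in_Dg: assumes e: "e \<in> edges_from_to G x y" shows "coset KK (L G e) \<in> Dg"
proof -
  have ee: "e \<in> edges G" and se: "src G e = x" and re: "rng G e = y" using e unfolding edges_from_to_def by auto
  have LT: "L G e \<in> Tplus G" using L_T[OF ee] .
  have eq: "sandw G y x (L G e) = L G e" unfolding sandw_def using PLP[of G y e x] se re by simp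
  have "\<forall>\<pi>\<in>RR. val \<pi> (coset KK (L G e)) $ 1 $ 1 = 0 \<and> val \<pi> (coset KK (L G e)) $ 2 $ 2 = 0"
  proof
    fix \<pi> assume p: "\<pi> \<in> RR"
    have "val \<pi> (coset KK (L G e)) = \<pi> (L G e)" using val_coset'[OF LT p] .
    also have "\<dots> = \<pi> (P G y) ** (\<pi> (L G e) ** \<pi> (P G x))" using pi_sandw[OF p LT yv xv] eq by simp
    finally show "val \<pi> (coset KK (L G e)) $ 1 $ 1 = 0 \<and> val \<pi> (coset KK (L G e)) $ 2 $ 2 = 0"
      using rep_PP'[OF p] rep_lower[OF p LT] by (simp add: mm_entries)
  qed
  thus ?thesis unfolding Dg_iff using coset_carr'[OF LT] by blast
qed

abbreviation "SS \<equiv> (\<lambda>e. coset KK (L G e)) ` edges_from_to G x y"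

lemma step1:
  assumes J: "is_ideal QQ J" and SJ: "SS \<subseteq> J"
  shows "B \<in> alg_gen (gens G) \<Longrightarrow> coset KK (sandw G y x B) \<in> J"
proof (induction rule: alg_gen.induct)
  have zJ: "zer QQ \<in> J" using J unfolding is_ideal_def by blast
  hence zJ': "coset KK op_zero \<in> J" unfolding Q_simps' .
  case (gen A)
  then consider (L) e' where "e' \<in> edges G" "A = L G e'" | (P) v where "v \<in> verts G" "A = P G v" by blast
  thus ?case
  proof cases
    case L
    show ?thesis
    proof (cases "src G e' = x \<and> rng G e' = y")
      case True
      hence "e' \<in> edges_from_to G x y" using L(1) unfolding edges_from_to_def by blast
      hence "coset KK (L G e') \<in> J" using SJ by blast
      thus ?thesis unfolding sandw_def L(2) PLP using True by simp
    next
      case False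
      thus ?thesis unfolding sandw_def L(2) PLP using zJ' by auto
    qed
  next
    case P
    show ?thesis unfolding sandw_def P(2) PvP[OF xy] using zJ' .
  qed
next
  case (add A B)
  have AT: "A \<in> Tplus G" and BT: "B \<in> Tplus G" using add.hyps alg_gen_T by auto
  have sA: "sandw G y x A \<in> Tplus G" and sB: "sandw G y x B \<in> Tplus G" using sandw_T AT BT xv yv by auto
  have cA: "coset KK (sandw G y x A) \<in> carr QQ" and cB: "coset KK (sandw G y x B) \<in> carr QQ"
    using coset_carr' sA sB by auto
  have sAB: "sandw G y x (op_add A B) \<in> Tplus G" using sandw_T T_add[OF AT BT] xv yv by auto
  have "coset KK (sandw G y x (op_add A B)) = plus QQ (coset KK (sandw G y x A)) (coset KK (sandw G y x B))"
  proof (rule Q_eqI'[OF coset_carr'[OF sAB] Q_ops_carr'(1)[OF cA cB]])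
    fix \<pi> assume p: "\<pi> \<in> RR"
    show "val \<pi> (coset KK (sandw G y x (op_add A B))) = val \<pi> (plus QQ (coset KK (sandw G y x A)) (coset KK (sandw G y x B)))"
      unfolding val_ops'(1)[OF cA cB p] val_coset'[OF sAB p] val_coset'[OF sA p] val_coset'[OF sB p]
        pi_sandw[OF p AT yv xv] pi_sandw[OF p BT yv xv] pi_sandw[OF p T_add[OF AT BT] yv xv] rep_hom(1)[OF p AT BT]
      by (simp add: mat22_eq mm_entries algebra_simps)
  qed
  moreover have "plus QQ (coset KK (sandw G y x A)) (coset KK (sandw G y x B)) \<in> J"
    using J add.IH unfolding is_ideal_def by blast
  ultimately show ?case by simp
next
  case (scale A c)
  have AT: "A \<in> Tplus G" using scale.hyps alg_gen_T by auto
  have sA: "sandw G y x A \<in> Tplus G" using sandw_T AT xv yv by auto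
  have cA: "coset KK (sandw G y x A) \<in> carr QQ" using coset_carr' sA by auto
  have sAB: "sandw G y x (op_scale c A) \<in> Tplus G" using sandw_T T_scale[OF AT] xv yv by auto
  have "coset KK (sandw G y x (op_scale c A)) = scal QQ c (coset KK (sandw G y x A))"
  proof (rule Q_eqI'[OF coset_carr'[OF sAB] Q_ops_carr'(3)[OF cA cA]])
    fix \<pi> assume p: "\<pi> \<in> RR"
    show "val \<pi> (coset KK (sandw G y x (op_scale c A))) = val \<pi> (scal QQ c (coset KK (sandw G y x A)))"
      unfolding val_ops'(3)[OF cA cA p] val_coset'[OF sAB p] val_coset'[OF sA p]
        pi_sandw[OF p AT yv xv] pi_sandw[OF p T_scale[OF AT] yv xv] rep_hom(3)[OF p AT AT]
      by (simp add: mat22_eq mm_entries mat_entries algebra_simps)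
  qed
  moreover have "scal QQ c (coset KK (sandw G y x A)) \<in> J"
    using J scale.IH unfolding is_ideal_def by blast
  ultimately show ?case by simp
next
  case (mult A B)
  have AT: "A \<in> Tplus G" and BT: "B \<in> Tplus G" using mult.hyps alg_gen_T by auto
  have sA: "sandw G y x A \<in> Tplus G" and sB: "sandw G y x B \<in> Tplus G" using sandw_T AT BT xv yv by auto
  have sA2: "sandw G y y A \<in> Tplus G" and sB2: "sandw G x x B \<in> Tplus G" using sandw_T AT BT xv yv by auto
  have cA: "coset KK (sandw G y x A) \<in> carr QQ" and cB: "coset KK (sandw G y x B) \<in> carr QQ"
    using coset_carr' sA sB by auto
  have cA2: "coset KK (sandw G y y A) \<in> carr QQ" and cB2: "coset KK (sandw G x x B) \<in> carr QQ"
    using coset_carr' sA2 sB2 by auto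
  have t1: "times QQ (coset KK (sandw G y x A)) (coset KK (sandw G x x B)) \<in> carr QQ" using Q_ops_carr'(2)[OF cA cB2] .
  have t2: "times QQ (coset KK (sandw G y y A)) (coset KK (sandw G y x B)) \<in> carr QQ" using Q_ops_carr'(2)[OF cA2 cB] .
  have sAB: "sandw G y x (op_mult A B) \<in> Tplus G" using sandw_T T_mult[OF AT BT] xv yv by auto
  have "coset KK (sandw G y x (op_mult A B)) = plus QQ (times QQ (coset KK (sandw G y x A)) (coset KK (sandw G x x B)))
            (times QQ (coset KK (sandw G y y A)) (coset KK (sandw G y x B)))"
  proof (rule Q_eqI'[OF coset_carr'[OF sAB] Q_ops_carr'(1)[OF t1 t2]])
    fix \<pi> assume p: "\<pi> \<in> RR"
    have l1: "\<pi> A $ 1 $ 2 = 0" and l2: "\<pi> B $ 1 $ 2 = 0" using rep_lower[OF p] AT BT by auto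
    show "val \<pi> (coset KK (sandw G y x (op_mult A B))) = val \<pi> (plus QQ (times QQ (coset KK (sandw G y x A)) (coset KK (sandw G x x B)))
            (times QQ (coset KK (sandw G y y A)) (coset KK (sandw G y x B))))"
      unfolding val_ops'(1)[OF t1 t2 p] val_ops'(2)[OF cA cB2 p] val_ops'(2)[OF cA2 cB p]
        val_coset'[OF sAB p] val_coset'[OF sA p] val_coset'[OF sB p] val_coset'[OF sA2 p] val_coset'[OF sB2 p]
        pi_sandw[OF p AT yv xv] pi_sandw[OF p BT yv xv] pi_sandw[OF p AT yv yv] pi_sandw[OF p BT xv xv]
        pi_sandw[OF p T_mult[OF AT BT] yv xv] rep_hom(2)[OF p AT BT]
      using rep_PP'[OF p] l1 l2 by (simp add: mat22_eq mm_entries algebra_simps)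
  qed
  moreover have "plus QQ (times QQ (coset KK (sandw G y x A)) (coset KK (sandw G x x B)))
            (times QQ (coset KK (sandw G y y A)) (coset KK (sandw G y x B))) \<in> J"
  proof -
    have "times QQ (coset KK (sandw G y x A)) (coset KK (sandw G x x B)) \<in> J"
      using J mult.IH(1) cB2 unfolding is_ideal_def by blast
    moreover have "times QQ (coset KK (sandw G y y A)) (coset KK (sandw G y x B)) \<in> J"
      using J mult.IH(2) cA2 unfolding is_ideal_def by blast
    ultimately show ?thesis using J unfolding is_ideal_def by blast
  qed
  ultimately show ?case by simp
qed

end

context QC
begin

lemma Dg_sub_J:
  assumes J: "is_ideal QQ J" and Jc: "is_closed_in QQ J" and SJ: "SS \<subseteq> J"
  shows "Dg \<subseteq> J"
proof
  fix C assume CD: "C \<in> Dg"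
  have Cc: "C \<in> carr QQ" using CD unfolding Dg_iff by auto
  define A where "A = crep C"
  have AT: "A \<in> Tplus G" and CA: "C = coset KK A" using carr_crep'[OF Cc] unfolding A_def by auto
  have sA: "sandw G y x A \<in> Tplus G" using sandw_T[OF AT yv xv] .
  have csA: "coset KK (sandw G y x A) \<in> carr QQ" using coset_carr'[OF sA] .
  have valC: "val \<pi> C = \<pi> A" for \<pi> unfolding val_def[OF xv yv xy] A_def by (rule refl)
  have C_eq: "C = coset KK (sandw G y x A)"
  proof (rule Q_eqI'[OF Cc csA])
    fix \<pi> assume p: "\<pi> \<in> RR"
    have d: "\<pi> A $ 1 $ 1 = 0" "\<pi> A $ 2 $ 2 = 0" using CD p unfolding Dg_iff valC by auto
    have l: "\<pi> A $ 1 $ 2 = 0" using rep_lower[OF p AT] .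
    show "val \<pi> C = val \<pi> (coset KK (sandw G y x A))"
      unfolding valC val_coset'[OF sA p] pi_sandw[OF p AT yv xv]
      using d l rep_PP'[OF p] by (simp add: mat22_eq mm_entries)
  qed
  have "\<forall>\<epsilon>>0. \<exists>D\<in>J. nrm QQ (plus QQ C (scal QQ (-1) D)) < \<epsilon>"
  proof (intro allI impI)
    fix \<epsilon> :: real assume ep: "\<epsilon> > 0"
    obtain B where B: "B \<in> alg_gen (gens G)" "opnorm G (op_diff A B) < \<epsilon>" using T_approx[OF AT ep] by blast
    have BT: "B \<in> Tplus G" using alg_gen_T[OF B(1)] .
    have sB: "sandw G y x B \<in> Tplus G" using sandw_T[OF BT yv xv] .
    have csB: "coset KK (sandw G y x B) \<in> carr QQ" using coset_carr'[OF sB] .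
    have DJ: "coset KK (sandw G y x B) \<in> J" using step1[OF J SJ B(1)] .
    have dT: "op_diff (sandw G y x A) (sandw G y x B) \<in> Tplus G" unfolding op_diff_def using sA sB by (intro T_add T_scale)
    have eq: "plus QQ C (scal QQ (-1) (coset KK (sandw G y x B))) = coset KK (op_diff (sandw G y x A) (sandw G y x B))"
    proof (rule Q_eqI'[OF diff_carr[OF Cc csB] coset_carr'[OF dT]])
      fix \<pi> assume p: "\<pi> \<in> RR"
      have "val \<pi> C = \<pi> (sandw G y x A)" using C_eq val_coset'[OF sA p] by simp
      thus "val \<pi> (plus QQ C (scal QQ (-1) (coset KK (sandw G y x B)))) = val \<pi> (coset KK (op_diff (sandw G y x A) (sandw G y x B)))"
        unfolding val_diff[OF Cc csB p] val_coset'[OF dT p] val_coset'[OF sB p] rep_diff[OF xv yv xy p sA sB] by simp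
    qed
    have "nrm QQ (plus QQ C (scal QQ (-1) (coset KK (sandw G y x B)))) \<le> opnorm G (op_diff (sandw G y x A) (sandw G y x B))"
      unfolding eq by (rule nrm_le'[OF dT])
    also have "\<dots> \<le> opnorm G (op_diff A B)" unfolding sandw_def by (rule sand_norm[OF T_bop[OF AT] T_bop[OF BT]])
    finally show "\<exists>D\<in>J. nrm QQ (plus QQ C (scal QQ (-1) D)) < \<epsilon>" using DJ B(2) by (intro bexI[OF _ DJ]) simp
  qed
  thus "C \<in> J" using Jc Cc unfolding is_closed_in_def by blast
qed

lemma SS_Dg: "SS \<subseteq> Dg" using L_in_Dg by blast

lemma gen_eq: "closed_ideal_gen QQ SS = Dg"
proof
  show "closed_ideal_gen QQ SS \<subseteq> Dg" unfolding closed_ideal_gen_def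
    using Dg_ideal Dg_closed SS_Dg by (intro Inter_lower) simp
  show "Dg \<subseteq> closed_ideal_gen QQ SS" unfolding closed_ideal_gen_def
    using Dg_sub_J by (intro Inter_greatest) auto
qed

lemma gen_set: "generating_set QQ (jrad QQ) SS"
  unfolding generating_set_def jrad_eq using SS_Dg gen_eq by simp

lemma coset_inj: "inj_on (\<lambda>e. coset KK (L G e)) (edges_from_to G x y)"
proof (rule inj_onI)
  fix e1 e2 assume e1: "e1 \<in> edges_from_to G x y" and e2: "e2 \<in> edges_from_to G x y"
    and eq: "coset KK (L G e1) = coset KK (L G e2)"
  have ee1: "e1 \<in> edges G" and ee2: "e2 \<in> edges G" using e1 e2 unfolding edges_from_to_def by auto
  have p: "pie G x y e1 \<in> RR" using pie_rep[OF xv yv xy e1] .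
  have "pie G x y e1 (L G e1) = pie G x y e1 (L G e2)" using coset_eqD'[OF L_T[OF ee1] L_T[OF ee2] eq p] .
  hence "pie G x y e1 (L G e1) $ 2 $ 1 = pie G x y e1 (L G e2) $ 2 $ 1" by simp
  thus "e1 = e2" using pie_L[OF xv yv xy e1 ee1] pie_L[OF xv yv xy e1 ee2] by (auto split: if_splits)
qed

end

context QC
begin

lemma valpie: "val (pie G x y e) C = pie G x y e (crep C)"
  by (rule val_def[OF xv yv xy])

lemma LB:
  assumes fS: "finite S'" and gS: "generating_set QQ (jrad QQ) S'"
    and E0: "E0 \<subseteq> edges_from_to G x y" "finite E0"
  shows "card E0 \<le> card S'"
proof (rule ccontr)
  assume "\<not> card E0 \<le> card S'"
  hence lt: "card S' < card E0" by simp
  define v where "v e s = val (pie G x y e) s $ 2 $ 1" for e s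
  obtain c where c: "\<exists>e\<in>E0. c e \<noteq> 0" "\<forall>s\<in>S'. (\<Sum>e\<in>E0. c e * v e s) = 0"
    using LA[OF fS E0(2) lt, of v] by blast
  have pR: "pie G x y e \<in> RR" if "e \<in> E0" for e using pie_rep[OF xv yv xy] E0(1) that by blast
  define J' where "J' = {C \<in> carr QQ. (\<forall>e\<in>E0. val (pie G x y e) C $ 1 $ 1 = 0 \<and> val (pie G x y e) C $ 2 $ 2 = 0)
       \<and> (\<Sum>e\<in>E0. c e * val (pie G x y e) C $ 2 $ 1) = 0}"
  have J'I: "C \<in> J'" if "C \<in> carr QQ" "\<And>e. e \<in> E0 \<Longrightarrow> val (pie G x y e) C $ 1 $ 1 = 0"
    "\<And>e. e \<in> E0 \<Longrightarrow> val (pie G x y e) C $ 2 $ 2 = 0" "(\<Sum>e\<in>E0. c e * val (pie G x y e) C $ 2 $ 1) = 0" for C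
    unfolding J'_def using that by blast
  have J'D: "C \<in> carr QQ" "\<And>e. e \<in> E0 \<Longrightarrow> val (pie G x y e) C $ 1 $ 1 = 0"
    "\<And>e. e \<in> E0 \<Longrightarrow> val (pie G x y e) C $ 2 $ 2 = 0" "(\<Sum>e\<in>E0. c e * val (pie G x y e) C $ 2 $ 1) = 0"
    if "C \<in> J'" for C using that unfolding J'_def by auto
  have idl: "is_ideal QQ J'"
    unfolding is_ideal_def
  proof (intro conjI ballI allI)
    show "J' \<subseteq> carr QQ" unfolding J'_def by blast
    have zc: "zer QQ \<in> carr QQ" using Q_ops_carr'(4)[OF coset_carr'[OF zT'] coset_carr'[OF zT']] .
    show "zer QQ \<in> J'" by (rule J'I[OF zc]) (simp_all add: val_ops'(4)[OF zc zc pR])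
  next
    fix a b assume a: "a \<in> J'" and b: "b \<in> J'"
    note ac = J'D(1)[OF a] and bc = J'D(1)[OF b]
    show "plus QQ a b \<in> J'"
    proof (rule J'I[OF Q_ops_carr'(1)[OF ac bc]])
      fix e assume e: "e \<in> E0"
      show "val (pie G x y e) (plus QQ a b) $ 1 $ 1 = 0" "val (pie G x y e) (plus QQ a b) $ 2 $ 2 = 0"
        using val_ops'(1)[OF ac bc pR[OF e]] J'D(2,3)[OF a e] J'D(2,3)[OF b e] by simp_all
    next
      have "(\<Sum>e\<in>E0. c e * val (pie G x y e) (plus QQ a b) $ 2 $ 1) =
         (\<Sum>e\<in>E0. c e * val (pie G x y e) a $ 2 $ 1) + (\<Sum>e\<in>E0. c e * val (pie G x y e) b $ 2 $ 1)"
        unfolding sum.distrib[symmetric] by (intro sum.cong refl) (simp add: val_ops'(1)[OF ac bc pR] distrib_left)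
      thus "(\<Sum>e\<in>E0. c e * val (pie G x y e) (plus QQ a b) $ 2 $ 1) = 0" using J'D(4)[OF a] J'D(4)[OF b] by simp
    qed
  next
    fix a t assume a: "a \<in> J'"
    note ac = J'D(1)[OF a]
    show "scal QQ t a \<in> J'"
    proof (rule J'I[OF Q_ops_carr'(3)[OF ac ac]])
      fix e assume e: "e \<in> E0"
      show "val (pie G x y e) (scal QQ t a) $ 1 $ 1 = 0" "val (pie G x y e) (scal QQ t a) $ 2 $ 2 = 0"
        using val_ops'(3)[OF ac ac pR[OF e]] J'D(2,3)[OF a e] by (simp_all add: mm_entries mat_entries)
    next
      have "(\<Sum>e\<in>E0. c e * val (pie G x y e) (scal QQ t a) $ 2 $ 1) = t * (\<Sum>e\<in>E0. c e * val (pie G x y e) a $ 2 $ 1)"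
        unfolding sum_distrib_left by (intro sum.cong refl) (simp add: val_ops'(3)[OF ac ac pR] mm_entries mat_entries)
      thus "(\<Sum>e\<in>E0. c e * val (pie G x y e) (scal QQ t a) $ 2 $ 1) = 0" using J'D(4)[OF a] by simp
    qed
  next
    fix a b assume a: "a \<in> J'" and bc: "b \<in> carr QQ"
    note ac = J'D(1)[OF a]
    show "times QQ b a \<in> J'"
    proof (rule J'I[OF Q_ops_carr'(2)[OF bc ac]])
      fix e assume e: "e \<in> E0"
      show "val (pie G x y e) (times QQ b a) $ 1 $ 1 = 0" "val (pie G x y e) (times QQ b a) $ 2 $ 2 = 0"
        using val_ops'(2)[OF bc ac pR[OF e]] J'D(2,3)[OF a e] by (simp_all add: mm_entries valpie)
    next
      have "(\<Sum>e\<in>E0. c e * val (pie G x y e) (times QQ b a) $ 2 $ 1) =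
          crep b (xi (y,[])) (y,[]) * (\<Sum>e\<in>E0. c e * val (pie G x y e) a $ 2 $ 1)"
        unfolding sum_distrib_left
      proof (intro sum.cong refl)
        fix e assume e: "e \<in> E0"
        show "c e * val (pie G x y e) (times QQ b a) $ 2 $ 1 = crep b (xi (y, [])) (y, []) * (c e * val (pie G x y e) a $ 2 $ 1)"
          using val_ops'(2)[OF bc ac pR[OF e]] J'D(2)[OF a e] by (simp add: mm_entries valpie)
      qed
      thus "(\<Sum>e\<in>E0. c e * val (pie G x y e) (times QQ b a) $ 2 $ 1) = 0" using J'D(4)[OF a] by simp
    qed
    show "times QQ a b \<in> J'"
    proof (rule J'I[OF Q_ops_carr'(2)[OF ac bc]])
      fix e assume e: "e \<in> E0"
      show "val (pie G x y e) (times QQ a b) $ 1 $ 1 = 0" "val (pie G x y e) (times QQ a b) $ 2 $ 2 = 0"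
        using val_ops'(2)[OF ac bc pR[OF e]] J'D(2,3)[OF a e] by (simp_all add: mm_entries valpie)
    next
      have "(\<Sum>e\<in>E0. c e * val (pie G x y e) (times QQ a b) $ 2 $ 1) =
          crep b (xi (x,[])) (x,[]) * (\<Sum>e\<in>E0. c e * val (pie G x y e) a $ 2 $ 1)"
        unfolding sum_distrib_left
      proof (intro sum.cong refl)
        fix e assume e: "e \<in> E0"
        show "c e * val (pie G x y e) (times QQ a b) $ 2 $ 1 = crep b (xi (x, [])) (x, []) * (c e * val (pie G x y e) a $ 2 $ 1)"
          using val_ops'(2)[OF ac bc pR[OF e]] J'D(3)[OF a e] by (simp add: mm_entries valpie)
      qed
      thus "(\<Sum>e\<in>E0. c e * val (pie G x y e) (times QQ a b) $ 2 $ 1) = 0" using J'D(4)[OF a] by simp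
    qed
  qed
  have pb: "cmod (val (pie G x y e) C $ i $ j) \<le> 4 * nrm QQ C" if e: "e \<in> E0" and C: "C \<in> carr QQ" for e C i j
  proof -
    have eE: "e \<in> edges_from_to G x y" using E0(1) e by blast
    have "norm (val (pie G x y e) C) \<le> 4 * nrm QQ C"
      by (rule val_bound_gen'[OF C pR[OF e]]) (use pie_bound[OF xv yv xy eE] in auto)
    thus ?thesis using entry_le[of "val (pie G x y e) C" i j] by linarith
  qed
  have cl: "is_closed_in QQ J'"
    unfolding is_closed_in_def
  proof (intro ballI impI)
    fix a assume ac: "a \<in> carr QQ" and ap: "\<forall>\<epsilon>>0. \<exists>b\<in>J'. nrm QQ (plus QQ a (scal QQ (-1) b)) < \<epsilon>"
    define K where "K = 4 * (\<Sum>e\<in>E0. cmod (c e)) + 4"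
    have K0: "0 \<le> (\<Sum>e\<in>E0. cmod (c e))" by (rule sum_nonneg) simp
    have key: "cmod (val (pie G x y e) a $ i $ i) \<le> d * K \<and> cmod (\<Sum>e\<in>E0. c e * val (pie G x y e) a $ 2 $ 1) \<le> d * K"
      if d: "d > 0" and e: "e \<in> E0" and ii: "i = 1 \<or> i = 2" for d e i
    proof -
      obtain b where b: "b \<in> J'" "nrm QQ (plus QQ a (scal QQ (-1) b)) < d" using ap d by blast
      note bc = J'D(1)[OF b(1)]
      define dd where "dd = plus QQ a (scal QQ (-1) b)"
      have dc: "dd \<in> carr QQ" unfolding dd_def by (rule diff_carr[OF ac bc])
      have vd: "val (pie G x y e') dd = val (pie G x y e') a - val (pie G x y e') b" if "e' \<in> E0" for e'
        unfolding dd_def by (rule val_diff[OF ac bc pR[OF that]])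
      have nd: "nrm QQ dd \<le> d" using b(2) unfolding dd_def by simp
      have "val (pie G x y e) a $ i $ i = val (pie G x y e) dd $ i $ i" using vd[OF e] J'D(2,3)[OF b(1) e] ii by auto
      hence "cmod (val (pie G x y e) a $ i $ i) \<le> 4 * nrm QQ dd" using pb[OF e dc, of i i] by simp
      also have "\<dots> \<le> 4 * d" using nd by simp
      also have "\<dots> \<le> d * K" unfolding K_def using d K0 by (simp add: algebra_simps)
      finally have r1: "cmod (val (pie G x y e) a $ i $ i) \<le> d * K" .
      have "(\<Sum>e\<in>E0. c e * val (pie G x y e) a $ 2 $ 1) = (\<Sum>e\<in>E0. c e * val (pie G x y e) dd $ 2 $ 1) + (\<Sum>e\<in>E0. c e * val (pie G x y e) b $ 2 $ 1)"
        unfolding sum.distrib[symmetric] by (intro sum.cong refl) (simp add: vd algebra_simps)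
      hence eqs: "(\<Sum>e\<in>E0. c e * val (pie G x y e) a $ 2 $ 1) = (\<Sum>e\<in>E0. c e * val (pie G x y e) dd $ 2 $ 1)"
        using J'D(4)[OF b(1)] by simp
      have "cmod (\<Sum>e\<in>E0. c e * val (pie G x y e) a $ 2 $ 1) = cmod (\<Sum>e\<in>E0. c e * val (pie G x y e) dd $ 2 $ 1)"
        unfolding eqs ..
      also have "\<dots> \<le> (\<Sum>e\<in>E0. cmod (c e * val (pie G x y e) dd $ 2 $ 1))"
        by (rule norm_sum)
      also have "\<dots> \<le> (\<Sum>e\<in>E0. cmod (c e) * (4 * d))"
      proof (rule sum_mono)
        fix e' assume e': "e' \<in> E0"
        have "cmod (val (pie G x y e') dd $ 2 $ 1) \<le> 4 * d" using pb[OF e' dc, of 2 1] nd by linarith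
        thus "cmod (c e' * val (pie G x y e') dd $ 2 $ 1) \<le> cmod (c e') * (4 * d)" by (simp add: norm_mult mult_left_mono)
      qed
      also have "\<dots> = d * (4 * (\<Sum>e\<in>E0. cmod (c e)))" by (simp add: sum_distrib_left sum_distrib_right mult.assoc mult.left_commute mult.commute)
      also have "\<dots> \<le> d * K" unfolding K_def using d by simp
      finally show ?thesis using r1 by simp
    qed
    show "a \<in> J'"
    proof (rule J'I[OF ac])
      fix e assume e: "e \<in> E0"
      show "val (pie G x y e) a $ 1 $ 1 = 0" by (rule small_zero2[of _ K]) (use key[OF _ e] in blast)
      show "val (pie G x y e) a $ 2 $ 2 = 0" by (rule small_zero2[of _ K]) (use key[OF _ e] in blast)
    next
      obtain e where e: "e \<in> E0" using c(1) by blast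
      show "(\<Sum>e\<in>E0. c e * val (pie G x y e) a $ 2 $ 1) = 0" by (rule small_zero2[of _ K]) (use key[OF _ e] in blast)
    qed
  qed
  have SJ: "S' \<subseteq> J'"
  proof
    fix s assume s: "s \<in> S'"
    have sD: "s \<in> Dg" using gS s unfolding generating_set_def jrad_eq by blast
    show "s \<in> J'"
    proof (rule J'I)
      show "s \<in> carr QQ" using sD unfolding Dg_iff by blast
      fix e assume "e \<in> E0"
      thus "val (pie G x y e) s $ 1 $ 1 = 0" "val (pie G x y e) s $ 2 $ 2 = 0" using sD pR unfolding Dg_iff by auto
    next
      show "(\<Sum>e\<in>E0. c e * val (pie G x y e) s $ 2 $ 1) = 0" using c(2) s unfolding v_def by blast
    qed
  qed
  have "jrad QQ \<subseteq> J'"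
  proof -
    have "closed_ideal_gen QQ S' \<subseteq> J'" unfolding closed_ideal_gen_def using idl cl SJ by (intro Inter_lower) simp
    thus ?thesis using gS unfolding generating_set_def by simp
  qed
  obtain e0 where e0: "e0 \<in> E0" "c e0 \<noteq> 0" using c(1) by blast
  have e0E: "e0 \<in> edges_from_to G x y" using E0(1) e0 by blast
  have ee0: "e0 \<in> edges G" using e0E unfolding edges_from_to_def by blast
  have "coset KK (L G e0) \<in> jrad QQ" using L_in_Dg[OF e0E] jrad_eq by simp
  hence inJ: "coset KK (L G e0) \<in> J'" using \<open>jrad QQ \<subseteq> J'\<close> by blast
  have "(\<Sum>e\<in>E0. c e * val (pie G x y e) (coset KK (L G e0)) $ 2 $ 1) = (\<Sum>e\<in>E0. if e = e0 then c e else 0)"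
  proof (intro sum.cong refl)
    fix e assume e: "e \<in> E0"
    have eE: "e \<in> edges_from_to G x y" using E0(1) e by blast
    show "c e * val (pie G x y e) (coset KK (L G e0)) $ 2 $ 1 = (if e = e0 then c e else 0)"
      using val_coset'[OF L_T[OF ee0] pR[OF e]] pie_L[OF xv yv xy eE ee0] by auto
  qed
  also have "\<dots> = c e0" using e0(1) E0(2) by simp
  finally show False using J'D(4)[OF inJ] e0(2) by simp
qed

end

theorem theorem2p10:
  fixes G :: "('v, 'e) digraph" and x y :: 'v and n :: enat
  assumes "digraph_wf G"
    and "countable (verts G)" and "countable (edges G)"
    and "x \<in> verts G" and "y \<in> verts G" and "x \<noteq> y"
    and "ecard (edges_from_to G x y) = n" and "1 \<le> n"
  shows "n_generated (QA G x y) (jrad (QA G x y)) n \<and>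
         generating_set (QA G x y) (jrad (QA G x y))
           ((\<lambda>e. coset (Kxy G x y) (L G e)) ` edges_from_to G x y)"
proof -
  interpret QC G x y using assms(4,5,6) by unfold_locales
  have gs: "generating_set QQ (jrad QQ) SS" by (rule gen_set)
  have ng: "n_generated QQ (jrad QQ) n"
  proof (cases "finite (edges_from_to G x y)")
    case True
    hence n: "n = enat (card (edges_from_to G x y))" using assms(7) unfolding ecard_def by simp
    have cS: "card SS = card (edges_from_to G x y)" by (rule card_image[OF coset_inj])
    have "\<exists>S. finite S \<and> generating_set QQ (jrad QQ) S \<and> enat (card S) = n"
      using gs cS n True by (intro exI[of _ SS]) simp
    moreover have "\<forall>S. finite S \<and> generating_set QQ (jrad QQ) S \<longrightarrow> n \<le> enat (card S)"
      using LB[OF _ _ order_refl True] n by simp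
    ultimately show ?thesis unfolding n_generated_def using n by simp
  next
    case False
    hence n: "n = \<infinity>" using assms(7) unfolding ecard_def by simp
    have "\<not> (\<exists>S. finite S \<and> generating_set QQ (jrad QQ) S)"
    proof
      assume "\<exists>S. finite S \<and> generating_set QQ (jrad QQ) S"
      then obtain S where S: "finite S" "generating_set QQ (jrad QQ) S" by blast
      obtain E0 where E0: "E0 \<subseteq> edges_from_to G x y" "finite E0" "card E0 = Suc (card S)"
        using infinite_arbitrarily_large[OF False] by blast
      show False using LB[OF S E0(1,2)] E0(3) by simp
    qed
    thus ?thesis unfolding n_generated_def using n by simp
  qed
  show ?thesis using ng gs by simp
qed

end
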